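(* Let $a<a_1<b_1<b$, $\Omega=(a,b)$, $\Omega_1=(a_1,b_1)$, $\Omega_2=(a,a_1)\cup(b_1,b)$. Let $\alpha,\beta,\gamma>0$, $\kappa\ge0$, $h,q\in L^2(\Omega)$, $g\in H^1(\Omega)$. Let $u_0\in H^1(\Omega)$ be the unique minimizer over $H^1(\Omega)$ of $$\mathcal{E}_0[u]=\int_\Omega\Big[\tfrac12(D_0|u'|^2+c_0u^2)-f_0u\Big]dx+\sum_{x\in\{a_1,b_1\}}\Big(\tfrac12\kappa u(x)^2+g(x)u(x)\Big)$$ (the weak solution of the two-sided problem $-u_1''+\gamma u_1=q$ in $\Omega_1$, $-\alpha u_2''+\beta u_2=h$ in $\Omega_2$, $u_1=u_2$ on $\partial\Omega_1$, $-(u_1-\alpha u_2)'n_1=\kappa u_1+g$ on $\partial\Omega_1$, $\alpha u_2'=0$ at $a,b$, with $u_0=u_i$ on $\Omega_i$ and $n_1$ the outward normal of $\Omega_1$). For $\varepsilon\in(0,1)$ let $u_\varepsilon\in H^1(\Omega)$ satisfy $$\int_\Omega\big(D_\varepsilon u_\varepsilon'v'+c_\varepsilon u_\varepsilon v+(\kappa u_\varepsilon+g)|\phi_\varepsilon'|v\big)dx=\int_\Omega f_\varepsilon v\,dx\quad\text{for all }v\in H^1(\Omega).$$ Then for every sequence $\varepsilon_k\searrow0$ there exists a subsequence $\{\varepsilon_{k_j}\}$ such that $u_{\varepsilon_{k_j}}\to u_0$ strongly in $H^1(\Omega)$.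
   Context: $H^1$ functions on an interval are identified with their continuous representatives. $r(x)$ is the signed distance from $x$ to $\{a_1,b_1\}$, positive in $\Omega_1$ and negative outside $[a_1,b_1]$; $\phi_\varepsilon=\tfrac12[1+\tanh(r/\varepsilon)]$. Coefficients: $D_\varepsilon=\alpha+(1-\alpha)\phi_\varepsilon$, $c_\varepsilon=\beta+(\gamma-\beta)\phi_\varepsilon$, $f_\varepsilon=h+(q-h)\phi_\varepsilon$, $D_0=\chi_{\Omega_1}+\alpha\chi_{\Omega_2}$, $c_0=\gamma\chi_{\Omega_1}+\beta\chi_{\Omega_2}$, $f_0=q\chi_{\Omega_1}+h\chi_{\Omega_2}$. *)

theory Defs
  imports "HOL-Analysis.Analysis"
begin

definition L2 :: "real \<Rightarrow> real \<Rightarrow> (real \<Rightarrow> real) \<Rightarrow> bool" where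
  "L2 a b f \<longleftrightarrow> set_borel_measurable lebesgue {a<..<b} f
      \<and> set_integrable lebesgue {a<..<b} (\<lambda>x. (f x)^2)"

definition test_fun :: "real \<Rightarrow> real \<Rightarrow> (real \<Rightarrow> real) \<Rightarrow> bool" where
  "test_fun a b \<phi> \<longleftrightarrow>
     (\<exists>F :: nat \<Rightarrow> real \<Rightarrow> real. F 0 = \<phi> \<and>
        (\<forall>n x. (F n has_real_derivative F (Suc n) x) (at x)))
   \<and> (\<exists>c d. a < c \<and> c \<le> d \<and> d < b \<and> (\<forall>x. x \<notin> {c..d} \<longrightarrow> \<phi> x = 0))"

text \<open>u belongs to H^1(a,b) (identified with its continuous representative on (a,b))
  and du is a weak derivative of u.\<close>
definition H1 :: "real \<Rightarrow> real \<Rightarrow> (real \<Rightarrow> real) \<Rightarrow> (real \<Rightarrow> real) \<Rightarrow> bool" where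
  "H1 a b u du \<longleftrightarrow> L2 a b u \<and> L2 a b du \<and> continuous_on {a<..<b} u \<and>
     (\<forall>\<phi>. test_fun a b \<phi> \<longrightarrow>
        (LINT x:{a<..<b}|lebesgue. u x * deriv \<phi> x) = - (LINT x:{a<..<b}|lebesgue. du x * \<phi> x))"

definition sdist :: "real \<Rightarrow> real \<Rightarrow> real \<Rightarrow> real" where
  "sdist a1 b1 x = (if x \<in> {a1..b1} then min \<bar>x - a1\<bar> \<bar>x - b1\<bar>
                    else - min \<bar>x - a1\<bar> \<bar>x - b1\<bar>)"

definition phi_eps :: "real \<Rightarrow> real \<Rightarrow> real \<Rightarrow> real \<Rightarrow> real" where
  "phi_eps a1 b1 \<epsilon> x = (1 + tanh (sdist a1 b1 x / \<epsilon>)) / 2"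

definition E0 :: "real \<Rightarrow> real \<Rightarrow> real \<Rightarrow> real \<Rightarrow> real \<Rightarrow> real \<Rightarrow> real \<Rightarrow> real
   \<Rightarrow> (real \<Rightarrow> real) \<Rightarrow> (real \<Rightarrow> real) \<Rightarrow> (real \<Rightarrow> real)
   \<Rightarrow> (real \<Rightarrow> real) \<Rightarrow> (real \<Rightarrow> real) \<Rightarrow> real" where
  "E0 a b a1 b1 \<alpha> \<beta> \<gamma> \<kappa> h q g u du =
    (let \<Omega>1 = {a1<..<b1}; \<Omega>2 = {a<..<a1} \<union> {b1<..<b};
         D0 = (\<lambda>x. indicator \<Omega>1 x + \<alpha> * indicator \<Omega>2 x);
         c0 = (\<lambda>x. \<gamma> * indicator \<Omega>1 x + \<beta> * indicator \<Omega>2 x);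
         f0 = (\<lambda>x. q x * indicator \<Omega>1 x + h x * indicator \<Omega>2 x)
     in (LINT x:{a<..<b}|lebesgue. (1/2) * (D0 x * (du x)^2 + c0 x * (u x)^2) - f0 x * u x)
        + (\<Sum>x\<in>{a1, b1}. (1/2) * \<kappa> * (u x)^2 + g x * u x))"

end

theory Submission
  imports Defs "HOL-Computational_Algebra.Polynomial" "HOL-Real_Asymp.Real_Asymp"
begin

primrec Ck :: "nat \<Rightarrow> (real \<Rightarrow> real) \<Rightarrow> bool" where
  "Ck 0 f = True"
| "Ck (Suc n) f = ((\<forall>x. f differentiable (at x)) \<and> Ck n (deriv f))"

definition smooth :: "(real \<Rightarrow> real) \<Rightarrow> bool" where
  "smooth f \<longleftrightarrow> (\<forall>n. Ck n f)"

lemma Ck_mono: "Ck (Suc n) f \<Longrightarrow> Ck n f"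
  by (induction n arbitrary: f) auto


lemma deriv_ev: "(f has_real_derivative D x) (at x) \<Longrightarrow> deriv f x = D x"
  by (rule DERIV_imp_deriv)

lemma Ck_const: "Ck n (\<lambda>x. c)"
proof (induction n arbitrary: c)
  case (Suc n)
  have "deriv (\<lambda>x. c) = (\<lambda>x. 0)" by (rule ext) simp
  then show ?case using Suc by simp
qed simp

lemma Ck_add: "Ck n f \<Longrightarrow> Ck n g \<Longrightarrow> Ck n (\<lambda>x. f x + g x)"
proof (induction n arbitrary: f g)
  case (Suc n)
  then have df: "\<And>x. f differentiable (at x)" and dg: "\<And>x. g differentiable (at x)" by auto
  have "deriv (\<lambda>x. f x + g x) = (\<lambda>x. deriv f x + deriv g x)"
    using df dg by (intro ext DERIV_imp_deriv DERIV_add) (auto simp: DERIV_deriv_iff_real_differentiable)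
  then show ?case using Suc df dg by auto
qed simp

lemma Ck_cmult: "Ck n f \<Longrightarrow> Ck n (\<lambda>x. c * f x)"
proof (induction n arbitrary: f)
  case (Suc n)
  then have df: "\<And>x. f differentiable (at x)" by auto
  have "deriv (\<lambda>x. c * f x) = (\<lambda>x. c * deriv f x)"
    using df by (intro ext DERIV_imp_deriv DERIV_cmult) (auto simp: DERIV_deriv_iff_real_differentiable)
  then show ?case using Suc df by auto
qed simp

lemma Ck_diff: "Ck n f \<Longrightarrow> Ck n g \<Longrightarrow> Ck n (\<lambda>x. f x - g x)"
  using Ck_add[of n f "\<lambda>x. (-1) * g x"] Ck_cmult[of n g "-1"] by simp

lemma Ck_mult: "Ck n f \<Longrightarrow> Ck n g \<Longrightarrow> Ck n (\<lambda>x. f x * g x)"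
proof (induction n arbitrary: f g)
  case (Suc n)
  then have df: "\<And>x. f differentiable (at x)" and dg: "\<And>x. g differentiable (at x)" by auto
  have "deriv (\<lambda>x. f x * g x) = (\<lambda>x. deriv f x * g x + f x * deriv g x)"
  proof (intro ext DERIV_imp_deriv)
    fix x
    have "(f has_real_derivative deriv f x) (at x)" "(g has_real_derivative deriv g x) (at x)"
      using df dg by (auto simp: DERIV_deriv_iff_real_differentiable)
    from DERIV_mult[OF this] show "((\<lambda>x. f x * g x) has_real_derivative deriv f x * g x + f x * deriv g x) (at x)"
      by (simp add: algebra_simps)
  qed
  moreover have "Ck n (\<lambda>x. deriv f x * g x + f x * deriv g x)"
    using Suc Ck_mono[OF Suc.prems(1)] Ck_mono[OF Suc.prems(2)]
    by (intro Ck_add) auto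
  ultimately show ?case using df dg by (simp add: differentiable_mult)
qed simp

lemma Ck_inverse: "Ck n f \<Longrightarrow> (\<And>x. f x \<noteq> 0) \<Longrightarrow> Ck n (\<lambda>x. 1 / f x)"
proof (induction n arbitrary: f)
  case (Suc n)
  then have df: "\<And>x. f differentiable (at x)" by auto
  have D: "((\<lambda>x. 1 / f x) has_real_derivative (- deriv f x * (1 / f x) * (1 / f x))) (at x)" for x
    using df[of x] Suc.prems(2)[of x]
    by (auto intro!: derivative_eq_intros simp: DERIV_deriv_iff_real_differentiable[symmetric] power2_eq_square field_simps)
  then have "deriv (\<lambda>x. 1 / f x) = (\<lambda>x. - deriv f x * (1 / f x) * (1 / f x))"
    by (intro ext DERIV_imp_deriv)
  moreover have "Ck n (\<lambda>x. - deriv f x * (1 / f x) * (1 / f x))"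
    using Suc Ck_mono[OF Suc.prems(1)]
    by (intro Ck_mult) (auto intro: Ck_cmult[of n _ "-1", simplified])
  moreover have "\<And>x. (\<lambda>x. 1 / f x) differentiable (at x)" using D real_differentiable_def by blast
  ultimately show ?case by simp
qed simp

lemma Ck_affine: "Ck n f \<Longrightarrow> Ck n (\<lambda>x. f (c * x + d))"
proof (induction n arbitrary: f)
  case (Suc n)
  then have df: "\<And>x. f differentiable (at x)" by auto
  have D: "((\<lambda>x. f (c * x + d)) has_real_derivative (c * deriv f (c * x + d))) (at x)" for x
  proof -
    have "(f has_real_derivative deriv f (c * x + d)) (at (c * x + d))"
      using df DERIV_deriv_iff_real_differentiable by blast
    moreover have "((\<lambda>x. c * x + d) has_real_derivative c) (at x)"
      by (auto intro!: derivative_eq_intros)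
    ultimately show ?thesis using DERIV_chain2 by (fastforce simp: mult.commute)
  qed
  then have "deriv (\<lambda>x. f (c * x + d)) = (\<lambda>x. c * deriv f (c * x + d))"
    by (intro ext DERIV_imp_deriv)
  moreover have "Ck n (\<lambda>x. c * deriv f (c * x + d))"
    using Suc by (intro Ck_cmult) auto
  moreover have "\<And>x. (\<lambda>x. f (c * x + d)) differentiable (at x)" using D real_differentiable_def by blast
  ultimately show ?case by simp
qed simp

lemma Ck_deriv_funpow: "Ck (Suc n) f \<Longrightarrow> ((deriv ^^ n) f) differentiable (at x)"
proof (induction n arbitrary: f)
  case 0 then show ?case by simp
next
  case (Suc n)
  have "(deriv ^^ Suc n) f = (deriv ^^ n) (deriv f)" by (simp add: funpow_Suc_right del: funpow.simps)
  then show ?case using Suc by simp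
qed

lemma smooth_test_fun:
  assumes "smooth \<phi>" "a < c" "c \<le> d" "d < b" "\<And>x. x \<notin> {c..d} \<Longrightarrow> \<phi> x = 0"
  shows "test_fun a b \<phi>"
  unfolding test_fun_def
proof (intro conjI exI[of _ "\<lambda>n. (deriv ^^ n) \<phi>"] allI)
  fix n x
  have "((deriv ^^ n) \<phi>) differentiable (at x)"
    using assms(1) Ck_deriv_funpow unfolding smooth_def by blast
  then show "((deriv ^^ n) \<phi> has_real_derivative (deriv ^^ Suc n) \<phi> x) (at x)"
    by (simp add: DERIV_deriv_iff_real_differentiable)
qed (use assms in auto)

definition Gp :: "real poly \<Rightarrow> real \<Rightarrow> real" where
  "Gp p t = (if t > 0 then poly p (1/t) * exp (-1/t) else 0)"

definition Tp :: "real poly \<Rightarrow> real poly" where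
  "Tp p = [:0,0,1:] * (p - pderiv p)"

lemma poly_exp_lim: "((\<lambda>s. poly (r::real poly) s * exp (-s)) \<longlongrightarrow> 0) at_top"
proof -
  have "((\<lambda>s. \<Sum>i\<le>degree r. coeff r i * (s ^ i / exp s)) \<longlongrightarrow> (\<Sum>i\<le>degree r. coeff r i * 0)) at_top"
    by (intro tendsto_sum tendsto_mult tendsto_const tendsto_power_div_exp_0)
  moreover have "(\<Sum>i\<le>degree r. coeff r i * (s ^ i / exp s)) = poly r s * exp (-s)" for s
    by (simp add: poly_altdef sum_distrib_left exp_minus divide_inverse mult_ac)
  ultimately show ?thesis by simp
qed

lemma Gp_deriv: "(Gp p has_real_derivative Gp (Tp p) t) (at t)"
proof -
  consider "t > 0" | "t < 0" | "t = 0" by linarith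
  then show ?thesis
  proof cases
    case 1
    have "((\<lambda>x. poly p (1/x) * exp (-1/x)) has_real_derivative Gp (Tp p) t) (at t)"
      using 1
      by (auto intro!: derivative_eq_intros simp: Gp_def Tp_def poly_pCons algebra_simps power2_eq_square
          divide_simps)
    then show ?thesis
      by (rule has_field_derivative_transform_within_open[where S="{0<..}"]) (use 1 in \<open>auto simp: Gp_def\<close>)
  next
    case 2
    have "((\<lambda>x. 0) has_real_derivative 0) (at t)" by simp
    then have "((\<lambda>x. 0) has_real_derivative Gp (Tp p) t) (at t)" using 2 by (simp add: Gp_def)
    then show ?thesis
      by (rule has_field_derivative_transform_within_open[where S="{..<0}"]) (use 2 in \<open>auto simp: Gp_def\<close>)
  next
    case 3
    have R: "((\<lambda>h. (Gp p h - Gp p 0) / (h - 0)) \<longlongrightarrow> 0) (at_right 0)"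
    proof -
      have "((\<lambda>s. poly (p * [:0,1:]) s * exp (-s)) \<longlongrightarrow> 0) at_top" by (rule poly_exp_lim)
      then have "((\<lambda>h. poly (p * [:0,1:]) (inverse h) * exp (- inverse h)) \<longlongrightarrow> 0) (at_right 0)"
        by (subst filterlim_at_right_to_top) (simp add: mult_ac)
      then show ?thesis
        by (rule Lim_transform_eventually)
           (auto simp: Gp_def divide_inverse mult_ac intro!: eventually_mono[OF eventually_at_right_less])
    qed
    have L: "((\<lambda>h. (Gp p h - Gp p 0) / (h - 0)) \<longlongrightarrow> 0) (at_left 0)"
    proof -
      have "\<forall>\<^sub>F h in at_left (0::real). (Gp p h - Gp p 0) / (h - 0) = 0"
        using eventually_at_left_real[of "-1" 0] by (rule eventually_mono) (auto simp: Gp_def)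
      then show ?thesis by (rule tendsto_eventually)
    qed
    have "Gp (Tp p) 0 = 0" by (simp add: Gp_def)
    then show ?thesis using 3 R L
      by (simp add: has_field_derivative_iff filterlim_at_split)
  qed
qed

lemma Ck_Gp: "Ck n (Gp p)"
proof (induction n arbitrary: p)
  case (Suc n)
  have "deriv (Gp p) = Gp (Tp p)" by (intro ext DERIV_imp_deriv Gp_deriv)
  moreover have "\<And>x. Gp p differentiable (at x)" using Gp_deriv real_differentiable_def by blast
  ultimately show ?case using Suc by simp
qed simp

definition Ef :: "real \<Rightarrow> real" where "Ef t = Gp 1 t"

lemma Ef_simp: "Ef t = (if t > 0 then exp (-1/t) else 0)" by (simp add: Ef_def Gp_def)

definition Sf :: "real \<Rightarrow> real" where "Sf t = Ef t * (1 / (Ef t + Ef (1 - t)))"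

lemma Ef_denom_pos: "Ef t + Ef (1 - t) > 0"
  by (auto simp: Ef_simp add_pos_nonneg add_nonneg_pos)

lemma smooth_Sf: "smooth Sf"
  unfolding smooth_def Sf_def
proof
  fix n
  have c1: "Ck n Ef" unfolding Ef_def by (rule Ck_Gp)
  have c2: "Ck n (\<lambda>t. Ef ((-1) * t + 1))" by (rule Ck_affine[OF c1])
  have "Ck n (\<lambda>t. Ef t + Ef (1 - t))" using Ck_add[OF c1 c2] by simp
  then have "Ck n (\<lambda>t. 1 / (Ef t + Ef (1 - t)))"
    by (rule Ck_inverse) (use Ef_denom_pos in \<open>metis less_irrefl\<close>)
  then show "Ck n (\<lambda>t. Ef t * (1 / (Ef t + Ef (1 - t))))" by (rule Ck_mult[OF c1])
qed

lemma Sf_0: "t \<le> 0 \<Longrightarrow> Sf t = 0" by (simp add: Sf_def Ef_simp)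
lemma Sf_1: "t \<ge> 1 \<Longrightarrow> Sf t = 1"
  using Ef_denom_pos[of t] by (simp add: Sf_def Ef_simp)
lemma Sf_bounds: "0 \<le> Sf t" "Sf t \<le> 1"
  using Ef_denom_pos[of t] by (auto simp: Sf_def Ef_simp divide_simps)

lemma Sf_differentiable: "Sf differentiable (at x)"
  using smooth_Sf unfolding smooth_def by (metis Ck.simps(2))

lemma Sf_deriv: "(Sf has_real_derivative deriv Sf x) (at x)"
  using Sf_differentiable DERIV_deriv_iff_real_differentiable by blast

lemma Sf_deriv_cont: "continuous_on UNIV (deriv Sf)"
proof -
  have "Ck 2 Sf" using smooth_Sf smooth_def by blast
  then have "\<And>x. deriv Sf differentiable (at x)" by (simp add: numeral_2_eq_2)
  then show ?thesis by (meson continuous_at_imp_continuous_on differentiable_imp_continuous_within)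
qed

lemma Sf_deriv_zero: "t \<le> 0 \<or> t \<ge> 1 \<Longrightarrow> deriv Sf t = 0"
proof -
  assume "t \<le> 0 \<or> t \<ge> 1"
  then show ?thesis
  proof
    assume "t \<le> 0"
    then have "Sf t = 0" by (rule Sf_0)
    then show ?thesis
      using DERIV_local_min[OF Sf_deriv, of 1] Sf_bounds by auto
  next
    assume "t \<ge> 1"
    then have "Sf t = 1" by (rule Sf_1)
    then show ?thesis
      using DERIV_local_max[OF Sf_deriv, of 1] Sf_bounds by auto
  qed
qed

lemma bm_leb: "(g::real\<Rightarrow>real) \<in> borel_measurable borel \<Longrightarrow> g \<in> borel_measurable lebesgue"
  by (rule measurable_completion) simp

lemma AE_leb_ne: "AE x in lebesgue. x \<noteq> (c::real)"
  by (rule AE_completion[OF AE_lborel_singleton])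

lemma sbm_of_int: "set_integrable M A (f::_\<Rightarrow>real) \<Longrightarrow> set_borel_measurable M A f"
  unfolding set_integrable_def set_borel_measurable_def by (rule borel_measurable_integrable)

lemma L2_sq: "L2 a b f \<Longrightarrow> set_integrable lebesgue {a<..<b} (\<lambda>x. (f x)^2)"
  by (simp add: L2_def)

lemma L2_meas: "L2 a b f \<Longrightarrow> set_borel_measurable lebesgue {a<..<b} f"
  by (simp add: L2_def)

lemma sbm_mult:
  assumes "set_borel_measurable lebesgue A f" "set_borel_measurable lebesgue A (g::real\<Rightarrow>real)"
  shows "set_borel_measurable lebesgue A (\<lambda>x. f x * g x)"
proof -
  have "(\<lambda>x. indicator A x *\<^sub>R (f x * g x)) = (\<lambda>x. (indicator A x *\<^sub>R f x) * (indicator A x *\<^sub>R g x))"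
    by (auto simp: indicator_def)
  then show ?thesis using assms unfolding set_borel_measurable_def by simp
qed

lemma sbm_add:
  assumes "set_borel_measurable lebesgue A f" "set_borel_measurable lebesgue A (g::real\<Rightarrow>real)"
  shows "set_borel_measurable lebesgue A (\<lambda>x. f x + g x)"
proof -
  have "(\<lambda>x. indicator A x *\<^sub>R (f x + g x)) = (\<lambda>x. (indicator A x *\<^sub>R f x) + (indicator A x *\<^sub>R g x))"
    by (auto simp: indicator_def)
  then show ?thesis using assms unfolding set_borel_measurable_def by simp
qed

lemma sbm_borel:
  assumes "(g::real\<Rightarrow>real) \<in> borel_measurable borel" "A \<in> sets lebesgue"
  shows "set_borel_measurable lebesgue A g"
  unfolding set_borel_measurable_def using bm_leb[OF assms(1)] assms(2)
  by (intro borel_measurable_scaleR borel_measurable_indicator) auto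

lemma L2_prod:
  assumes "L2 a b f" "L2 a b g"
  shows "set_integrable lebesgue {a<..<b} (\<lambda>x. f x * g x)"
proof (rule set_integrable_bound[where f="\<lambda>x. (f x)^2 + (g x)^2"])
  show "set_integrable lebesgue {a<..<b} (\<lambda>x. (f x)\<^sup>2 + (g x)\<^sup>2)"
    using assms by (intro set_integral_add L2_sq)
  show "set_borel_measurable lebesgue {a<..<b} (\<lambda>x. f x * g x)"
    using assms by (intro sbm_mult L2_meas)
  have "\<bar>f x * g x\<bar> \<le> (f x)^2 + (g x)^2" for x
  proof -
    have "0 \<le> (\<bar>f x\<bar> - \<bar>g x\<bar>)^2" by simp
    then have "2 * (\<bar>f x\<bar> * \<bar>g x\<bar>) \<le> (f x)^2 + (g x)^2"
      by (simp add: power2_eq_square algebra_simps)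
    moreover have "0 \<le> \<bar>f x\<bar> * \<bar>g x\<bar>" by simp
    ultimately have "\<bar>f x\<bar> * \<bar>g x\<bar> \<le> (f x)^2 + (g x)^2" by linarith
    then show ?thesis by (simp add: abs_mult)
  qed
  then show "AE x\<in>{a<..<b} in lebesgue. norm (f x * g x) \<le> norm ((f x)\<^sup>2 + (g x)\<^sup>2)"
    by auto
qed

lemma L2_cont:
  assumes "continuous_on {a..b} g"
  shows "L2 a b g"
proof -
  have "continuous_on {a..b} (\<lambda>x. (g x)^2)" using assms by (intro continuous_intros)
  then have "set_integrable lebesgue {a..b} (\<lambda>x. (g x)^2)" by (rule absolutely_integrable_continuous_real)
  then have i2: "set_integrable lebesgue {a<..<b} (\<lambda>x. (g x)^2)" by (rule set_integrable_subset) auto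
  have "set_integrable lebesgue {a..b} g" using assms by (rule absolutely_integrable_continuous_real)
  then have "set_integrable lebesgue {a<..<b} g" by (rule set_integrable_subset) auto
  then show ?thesis using i2 sbm_of_int unfolding L2_def by blast
qed

lemma L2_bdd_mult:
  assumes "L2 a b f" "set_borel_measurable lebesgue {a<..<b} g" "\<And>x. x \<in> {a<..<b} \<Longrightarrow> \<bar>g x\<bar> \<le> B"
  shows "L2 a b (\<lambda>x. g x * f x)"
proof -
  have m: "set_borel_measurable lebesgue {a<..<b} (\<lambda>x. g x * f x)"
    using assms(2) L2_meas[OF assms(1)] by (rule sbm_mult)
  have "set_integrable lebesgue {a<..<b} (\<lambda>x. (g x * f x)^2)"
  proof (rule set_integrable_bound[where f="\<lambda>x. B^2 * (f x)^2"])
    show "set_integrable lebesgue {a<..<b} (\<lambda>x. B\<^sup>2 * (f x)\<^sup>2)"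
      using L2_sq[OF assms(1)] by (rule set_integrable_mult_right)
    show "set_borel_measurable lebesgue {a<..<b} (\<lambda>x. (g x * f x)\<^sup>2)"
      unfolding power2_eq_square using sbm_mult[OF m m] by simp
    have "norm ((g x * f x)\<^sup>2) \<le> norm (B\<^sup>2 * (f x)\<^sup>2)" if "x \<in> {a<..<b}" for x
    proof -
      have "\<bar>g x\<bar>^2 \<le> B^2" using assms(3)[OF that] by (intro power_mono) auto
      then show ?thesis by (simp add: power_mult_distrib mult_right_mono)
    qed
    then show "AE x\<in>{a<..<b} in lebesgue. norm ((g x * f x)\<^sup>2) \<le> norm (B\<^sup>2 * (f x)\<^sup>2)"
      by auto
  qed
  then show ?thesis using m unfolding L2_def by blast
qed

lemma L2_cmult: "L2 a b f \<Longrightarrow> L2 a b (\<lambda>x. c * f x)"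
  by (rule L2_bdd_mult[where B="\<bar>c\<bar>"]) (auto intro: sbm_borel)

lemma L2_add:
  assumes "L2 a b f" "L2 a b g"
  shows "L2 a b (\<lambda>x. f x + g x)"
proof -
  have "set_integrable lebesgue {a<..<b} (\<lambda>x. (f x)^2 + 2 * (f x * g x) + (g x)^2)"
    using assms by (intro set_integral_add set_integrable_mult_right L2_sq L2_prod)
  moreover have "(\<lambda>x. (f x)^2 + 2 * (f x * g x) + (g x)^2) = (\<lambda>x. (f x + g x)^2)"
    by (auto simp: power2_eq_square algebra_simps)
  ultimately show ?thesis using assms unfolding L2_def by (auto intro: sbm_add)
qed

lemma L2_diff: "L2 a b f \<Longrightarrow> L2 a b g \<Longrightarrow> L2 a b (\<lambda>x. f x - g x)"
  using L2_add[of a b f "\<lambda>x. (-1) * g x"] L2_cmult[of a b g "-1"] by simp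

lemma L2_const: "L2 a b (\<lambda>x. c)"
  by (rule L2_cont) simp

lemma L2_L1: "L2 a b f \<Longrightarrow> set_integrable lebesgue {a<..<b} f"
  using L2_prod[of a b f "\<lambda>x. 1"] L2_const by simp

lemma L2_borel_bdd_mult:
  assumes "L2 a b f" "g \<in> borel_measurable borel" "\<And>x. x \<in> {a<..<b} \<Longrightarrow> \<bar>g x\<bar> \<le> B"
  shows "L2 a b (\<lambda>x. g x * f x)"
  using assms by (intro L2_bdd_mult[where B=B] sbm_borel) auto

lemma Sf_deriv_bound: obtains M where "M > 0" "\<And>s. \<bar>deriv Sf s\<bar> \<le> M"
proof -
  have "compact (deriv Sf ` {0..1})"
    by (rule compact_continuous_image) (use Sf_deriv_cont continuous_on_subset in auto)
  then obtain M where M: "M > 0" "\<And>y. y \<in> deriv Sf ` {0..1} \<Longrightarrow> norm y \<le> M"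
    using compact_imp_bounded bounded_pos by metis
  have "\<bar>deriv Sf s\<bar> \<le> M" for s
  proof (cases "s \<in> {0..1}")
    case True then show ?thesis using M by auto
  next
    case False then show ?thesis using Sf_deriv_zero[of s] M by auto
  qed
  then show ?thesis using M that by blast
qed

lemma Sf_aff_deriv:
  assumes "\<delta> > 0"
  shows "((\<lambda>t. Sf ((t - z) / \<delta>)) has_real_derivative deriv Sf ((t - z) / \<delta>) / \<delta>) (at t)"
proof -
  have "((\<lambda>t. (t - z) / \<delta>) has_real_derivative 1 / \<delta>) (at t)"
    using assms by (auto intro!: derivative_eq_intros)
  from DERIV_chain2[OF Sf_deriv this] show ?thesis by simp
qed

lemma Sf_aff_deriv_cont: "\<delta> > 0 \<Longrightarrow> continuous_on A (\<lambda>t. deriv Sf ((t - z) / \<delta>) / \<delta>)"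
proof -
  assume "\<delta> > 0"
  have "continuous_on A (\<lambda>t. (t - z) / \<delta>)" using \<open>\<delta> > 0\<close> by (intro continuous_intros) auto
  then have "continuous_on A (\<lambda>t. deriv Sf ((t - z) / \<delta>))"
    using continuous_on_compose2[OF Sf_deriv_cont] by blast
  then show ?thesis using \<open>\<delta> > 0\<close> by (intro continuous_intros) auto
qed

lemma J_eq:
  assumes cont: "continuous_on {a<..<b} v" and "a < z" "\<delta> > 0" "z + \<delta> < b"
  shows "(LINT t:{a<..<b}|lebesgue. v t * (deriv Sf ((t - z) / \<delta>) / \<delta>))
        = integral {z..z+\<delta>} (\<lambda>t. v t * (deriv Sf ((t - z) / \<delta>) / \<delta>))"
proof -
  let ?F = "\<lambda>t. v t * (deriv Sf ((t - z) / \<delta>) / \<delta>)"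
  have ind: "indicator {a<..<b} t *\<^sub>R ?F t = indicator {z..z+\<delta>} t *\<^sub>R ?F t" for t
  proof (cases "t \<in> {z..z+\<delta>}")
    case True then show ?thesis using assms by (auto simp: indicator_def)
  next
    case False
    then have "(t - z) / \<delta> \<le> 0 \<or> (t - z) / \<delta> \<ge> 1" using assms by (auto simp: divide_simps)
    then show ?thesis using False by (simp add: Sf_deriv_zero)
  qed
  then have "(LINT t:{a<..<b}|lebesgue. ?F t) = (LINT t:{z..z+\<delta>}|lebesgue. ?F t)"
    unfolding set_lebesgue_integral_def by (simp only: ind)
  also have "\<dots> = integral {z..z+\<delta>} ?F"
  proof (rule set_lebesgue_integral_eq_integral(2), rule absolutely_integrable_continuous_real)
    have "continuous_on {z..z+\<delta>} v" using cont by (rule continuous_on_subset) (use assms in auto)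
    then show "continuous_on {z..z+\<delta>} ?F" by (rule continuous_on_mult[OF _ Sf_aff_deriv_cont[OF assms(3)]])
  qed
  finally show ?thesis .
qed

lemma J_one:
  assumes "\<delta> > 0"
  shows "integral {z..z+\<delta>} (\<lambda>t. deriv Sf ((t - z) / \<delta>) / \<delta>) = 1"
proof -
  have "((\<lambda>t. deriv Sf ((t - z) / \<delta>) / \<delta>) has_integral (Sf ((z + \<delta> - z) / \<delta>) - Sf ((z - z) / \<delta>))) {z..z+\<delta>}"
    by (rule fundamental_theorem_of_calculus)
       (use assms in \<open>auto intro!: DERIV_subset[OF Sf_aff_deriv, unfolded has_real_derivative_iff_has_vector_derivative]\<close>)
  then have "((\<lambda>t. deriv Sf ((t - z) / \<delta>) / \<delta>) has_integral 1) {z..z+\<delta>}"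
    using assms by (simp add: Sf_0 Sf_1)
  then show ?thesis by (rule integral_unique)
qed

lemma J_conv:
  fixes v :: "real \<Rightarrow> real" and d :: "nat \<Rightarrow> real"
  assumes cont: "continuous_on {a<..<b} v" and az: "a < z" and dpos: "\<And>n. d n > 0"
    and db: "\<And>n. z + d n < b" and d0: "d \<longlonglongrightarrow> 0"
  shows "(\<lambda>n. LINT t:{a<..<b}|lebesgue. v t * (deriv Sf ((t - z) / d n) / d n)) \<longlonglongrightarrow> v z"
proof -
  obtain M where M: "M > 0" "\<And>s. \<bar>deriv Sf s\<bar> \<le> M" using Sf_deriv_bound by blast
  have zI: "z \<in> {a<..<b}" using az db[of 0] dpos[of 0] by auto
  have key: "\<bar>(LINT t:{a<..<b}|lebesgue. v t * (deriv Sf ((t - z) / \<delta>) / \<delta>)) - v z\<bar> \<le> \<eta> * M"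
    if "\<delta> > 0" "z + \<delta> < b" "\<eta> \<ge> 0" "\<And>t. t \<in> {z..z+\<delta>} \<Longrightarrow> \<bar>v t - v z\<bar> \<le> \<eta>" for \<delta> \<eta>
  proof -
    let ?K = "\<lambda>t. deriv Sf ((t - z) / \<delta>) / \<delta>"
    have cv: "continuous_on {z..z+\<delta>} v" using cont by (rule continuous_on_subset) (use that az in auto)
    have i1: "(\<lambda>t. v t * ?K t) integrable_on {z..z+\<delta>}"
      by (rule integrable_continuous_real) (rule continuous_on_mult[OF _ Sf_aff_deriv_cont[OF that(1)]], intro continuous_intros cv)
    have i2: "(\<lambda>t. v z * ?K t) integrable_on {z..z+\<delta>}"
      by (rule integrable_continuous_real) (rule continuous_on_mult[OF _ Sf_aff_deriv_cont[OF that(1)]], intro continuous_intros)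
    have "(LINT t:{a<..<b}|lebesgue. v t * ?K t) - v z
        = integral {z..z+\<delta>} (\<lambda>t. v t * ?K t) - integral {z..z+\<delta>} (\<lambda>t. v z * ?K t)"
      using J_eq[OF cont az that(1,2)] J_one[OF that(1), of z] by simp
    also have "\<dots> = integral {z..z+\<delta>} (\<lambda>t. (v t - v z) * ?K t)"
      by (subst integral_diff[OF i1 i2, symmetric]) (simp only: left_diff_distrib)
    finally have eq: "(LINT t:{a<..<b}|lebesgue. v t * ?K t) - v z = integral {z..z+\<delta>} (\<lambda>t. (v t - v z) * ?K t)" .
    have "norm (integral (cbox z (z+\<delta>)) (\<lambda>t. (v t - v z) * ?K t)) \<le> (\<eta> * M / \<delta>) * Henstock_Kurzweil_Integration.content (cbox z (z+\<delta>))"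
    proof (rule integrable_bound)
      show "0 \<le> \<eta> * M / \<delta>" using that M by simp
      show "(\<lambda>t. (v t - v z) * ?K t) integrable_on cbox z (z + \<delta>)"
        unfolding cbox_interval
        by (rule integrable_continuous_real) (rule continuous_on_mult[OF _ Sf_aff_deriv_cont[OF that(1)]], intro continuous_intros cv)
      fix t assume "t \<in> cbox z (z + \<delta>)"
      then have "\<bar>v t - v z\<bar> \<le> \<eta>" using that by (simp add: cbox_interval)
      moreover have "\<bar>?K t\<bar> \<le> M / \<delta>" using M(2)[of "(t - z) / \<delta>"] that(1) by (simp add: divide_right_mono)
      ultimately show "norm ((v t - v z) * ?K t) \<le> \<eta> * M / \<delta>"
        unfolding norm_mult real_norm_def using mult_mono[of "\<bar>v t - v z\<bar>" \<eta> "\<bar>?K t\<bar>" "M/\<delta>"] that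
        by (simp add: mult_nonneg_nonneg abs_mult)
    qed
    then show ?thesis using that(1) eq by (simp add: cbox_interval)
  qed
  show ?thesis
    unfolding tendsto_iff dist_real_def
  proof (intro allI impI)
    fix r :: real assume r: "r > 0"
    define \<eta> where "\<eta> = r / (2 * M)"
    have \<eta>: "\<eta> > 0" "\<eta> * M < r" using r M by (auto simp: \<eta>_def field_simps)
    obtain \<rho> where \<rho>: "\<rho> > 0" "\<And>t. t \<in> {a<..<b} \<Longrightarrow> dist t z < \<rho> \<Longrightarrow> dist (v t) (v z) < \<eta>"
      using cont zI \<eta>(1) unfolding continuous_on_iff by blast
    have "\<forall>\<^sub>F n in sequentially. d n < \<rho>" using d0 \<rho>(1) by (rule order_tendstoD)
    then show "\<forall>\<^sub>F n in sequentially. \<bar>(LINT t:{a<..<b}|lebesgue. v t * (deriv Sf ((t - z) / d n) / d n)) - v z\<bar> < r"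
    proof (rule eventually_mono)
      fix n assume dn: "d n < \<rho>"
      have "\<bar>v t - v z\<bar> \<le> \<eta>" if "t \<in> {z..z + d n}" for t
        using \<rho>(2)[of t] that dn az db[of n] by (auto simp: dist_real_def)
      then have "\<bar>(LINT t:{a<..<b}|lebesgue. v t * (deriv Sf ((t - z) / d n) / d n)) - v z\<bar> \<le> \<eta> * M"
        using key[of "d n" \<eta>] dpos db \<eta> by auto
      then show "\<bar>(LINT t:{a<..<b}|lebesgue. v t * (deriv Sf ((t - z) / d n) / d n)) - v z\<bar> < r"
        using \<eta> by linarith
    qed
  qed
qed

lemma smooth_Sf_aff: "\<delta> > 0 \<Longrightarrow> Ck k (\<lambda>t. Sf ((t - x) / \<delta>))"
proof -
  assume "\<delta> > 0"
  have "(\<lambda>t. Sf ((t - x) / \<delta>)) = (\<lambda>t. Sf ((1/\<delta>) * t + (- x / \<delta>)))"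
    by (rule ext) (simp add: diff_divide_distrib)
  moreover have "Ck k (\<lambda>t. Sf ((1/\<delta>) * t + (- x / \<delta>)))"
    using smooth_Sf unfolding smooth_def by (intro Ck_affine) auto
  ultimately show ?thesis by simp
qed

lemma H1_FTC:
  assumes H: "H1 a b v dv" and ax: "a < x" and xy: "x < y" and yb: "y < b"
  shows "v y - v x = (LINT t:{x<..y}|lebesgue. dv t)"
proof -
  define d where "d n = (b - y) / real (Suc (Suc n))" for n
  have dpos: "d n > 0" for n using yb by (simp add: d_def)
  have dle: "d n < b - y" for n
    using yb by (simp add: d_def divide_less_eq)
  have dxb: "x + d n < b" "y + d n < b" for n using dle[of n] xy by auto
  have d0: "d \<longlonglongrightarrow> 0"
  proof -
    have "(\<lambda>n. (b - y) / real (Suc (Suc n))) \<longlonglongrightarrow> 0"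
      by (intro tendsto_divide_0[OF tendsto_const] filterlim_real_sequentially[THEN filterlim_sequentially_Suc[THEN iffD2], THEN filterlim_sequentially_Suc[THEN iffD2]]
          filterlim_at_top_imp_at_infinity)
    then show ?thesis by (simp add: d_def[abs_def])
  qed
  define \<phi> where "\<phi> n t = Sf ((t - x) / d n) - Sf ((t - y) / d n)" for n t
  have vL2: "L2 a b v" and dvL2: "L2 a b dv" and vc: "continuous_on {a<..<b} v"
    using H by (auto simp: H1_def)
  have tf: "test_fun a b (\<phi> n)" for n
  proof (rule smooth_test_fun[where c=x and d="y + d n"])
    show "smooth (\<phi> n)" unfolding smooth_def \<phi>_def
      using smooth_Sf_aff dpos by (intro allI Ck_diff) auto
    show "a < x" "x \<le> y + d n" "y + d n < b" using ax xy dpos[of n] dle[of n] by auto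
    fix t assume "t \<notin> {x..y + d n}"
    then have "t < x \<or> t > y + d n" by auto
    then show "\<phi> n t = 0"
    proof
      assume "t < x"
      then have "(t - x) / d n \<le> 0" "(t - y) / d n \<le> 0" using dpos[of n] xy by (auto simp: divide_le_0_iff)
      then show ?thesis by (simp add: \<phi>_def Sf_0)
    next
      assume "t > y + d n"
      then have "(t - x) / d n \<ge> 1" "(t - y) / d n \<ge> 1" using dpos[of n] xy by (auto simp: le_divide_eq)
      then show ?thesis by (simp add: \<phi>_def Sf_1)
    qed
  qed
  have dphi: "deriv (\<phi> n) t = deriv Sf ((t - x) / d n) / d n - deriv Sf ((t - y) / d n) / d n" for n t
    unfolding \<phi>_def[abs_def] by (rule DERIV_imp_deriv, rule DERIV_diff) (auto intro: Sf_aff_deriv dpos)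
  have weak: "(LINT t:{a<..<b}|lebesgue. v t * deriv (\<phi> n) t) = - (LINT t:{a<..<b}|lebesgue. dv t * \<phi> n t)" for n
    using H tf unfolding H1_def by blast
  have Kint: "set_integrable lebesgue {a<..<b} (\<lambda>t. v t * (deriv Sf ((t - z) / d n) / d n))" for z n
    by (rule L2_prod[OF vL2 L2_cont]) (rule Sf_aff_deriv_cont[OF dpos])
  have lhs: "(LINT t:{a<..<b}|lebesgue. v t * deriv (\<phi> n) t)
      = (LINT t:{a<..<b}|lebesgue. v t * (deriv Sf ((t - x) / d n) / d n))
      - (LINT t:{a<..<b}|lebesgue. v t * (deriv Sf ((t - y) / d n) / d n))" for n
    unfolding dphi right_diff_distrib by (rule set_integral_diff(2)[OF Kint Kint])
  have L1: "(\<lambda>n. LINT t:{a<..<b}|lebesgue. v t * deriv (\<phi> n) t) \<longlonglongrightarrow> v x - v y"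
    unfolding lhs
    by (intro tendsto_diff J_conv[OF vc] dpos d0) (use ax xy dxb in auto)
  have R: "(\<lambda>n. LINT t:{a<..<b}|lebesgue. dv t * \<phi> n t) \<longlonglongrightarrow> (LINT t:{x<..y}|lebesgue. dv t)"
  proof -
    have dvI: "set_integrable lebesgue {a<..<b} dv" by (rule L2_L1[OF dvL2])
    have dvm: "(\<lambda>t. indicator {a<..<b} t *\<^sub>R dv t) \<in> borel_measurable lebesgue"
      using L2_meas[OF dvL2] unfolding set_borel_measurable_def .
    have phim: "\<phi> n \<in> borel_measurable lebesgue" for n
    proof -
      have cS: "continuous_on UNIV Sf"
        using Sf_differentiable by (meson continuous_at_imp_continuous_on differentiable_imp_continuous_within)
      have c1: "continuous_on UNIV (\<lambda>t. (t - z) / d n)" for z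
        using dpos[of n] by (intro continuous_intros) auto
      have "continuous_on UNIV (\<phi> n)"
        unfolding \<phi>_def[abs_def]
        by (intro continuous_on_diff continuous_on_compose2[OF cS c1]) auto
      then show ?thesis by (intro bm_leb borel_measurable_continuous_onI)
    qed
    have phib: "\<bar>\<phi> n t\<bar> \<le> 1" for n t
      using Sf_bounds[of "(t - x) / d n"] Sf_bounds[of "(t - y) / d n"] by (auto simp: \<phi>_def)
    have "(\<lambda>n. integral\<^sup>L lebesgue (\<lambda>t. (indicator {a<..<b} t *\<^sub>R dv t) * \<phi> n t))
        \<longlonglongrightarrow> integral\<^sup>L lebesgue (\<lambda>t. indicator {x<..y} t *\<^sub>R (indicator {a<..<b} t *\<^sub>R dv t))"
    proof (rule integral_dominated_convergence[where w="\<lambda>t. \<bar>indicator {a<..<b} t *\<^sub>R dv t\<bar>"])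
      show "(\<lambda>t. indicator {x<..y} t *\<^sub>R (indicator {a<..<b} t *\<^sub>R dv t)) \<in> borel_measurable lebesgue"
        by (rule borel_measurable_scaleR[OF borel_measurable_indicator dvm]) simp
      show "(\<lambda>t. (indicator {a<..<b} t *\<^sub>R dv t) * \<phi> n t) \<in> borel_measurable lebesgue" for n
        using dvm phim by (intro borel_measurable_times)
      show "integrable lebesgue (\<lambda>t. \<bar>indicator {a<..<b} t *\<^sub>R dv t\<bar>)"
        using dvI unfolding set_integrable_def by (rule integrable_abs)
      show "AE t in lebesgue. norm ((indicator {a<..<b} t *\<^sub>R dv t) * \<phi> n t) \<le> \<bar>indicator {a<..<b} t *\<^sub>R dv t\<bar>" for n
        using phib[of n] by (auto simp: abs_mult intro!: mult_left_le)
      show "AE t in lebesgue. (\<lambda>n. (indicator {a<..<b} t *\<^sub>R dv t) * \<phi> n t) \<longlonglongrightarrow> indicator {x<..y} t *\<^sub>R (indicator {a<..<b} t *\<^sub>R dv t)"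
      proof (rule AE_I2)
        fix t
        have "(\<lambda>n. \<phi> n t) \<longlonglongrightarrow> indicator {x<..y} t"
        proof (cases "t \<le> x")
          case True
          then have "\<phi> n t = 0" for n
            using dpos[of n] xy by (auto simp: \<phi>_def Sf_0 divide_le_0_iff)
          then show ?thesis using True by simp
        next
          case False
          show ?thesis
          proof (cases "t \<le> y")
            case True
            have "\<forall>\<^sub>F n in sequentially. d n < t - x" using d0 False by (intro order_tendstoD) auto
            then have "\<forall>\<^sub>F n in sequentially. \<phi> n t = 1"
            proof (rule eventually_mono)
              fix n assume "d n < t - x"
              then have "(t - x) / d n \<ge> 1" "(t - y) / d n \<le> 0" using dpos[of n] True
                by (auto simp: le_divide_eq divide_le_0_iff)
              then show "\<phi> n t = 1" by (simp add: \<phi>_def Sf_0 Sf_1)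
            qed
            then show ?thesis using False True by (simp add: tendsto_eventually)
          next
            case False2: False
            have "\<forall>\<^sub>F n in sequentially. d n < t - y" using d0 False2 by (intro order_tendstoD) auto
            then have "\<forall>\<^sub>F n in sequentially. \<phi> n t = 0"
            proof (rule eventually_mono)
              fix n assume "d n < t - y"
              then have "(t - x) / d n \<ge> 1" "(t - y) / d n \<ge> 1" using dpos[of n] xy
                by (auto simp: le_divide_eq)
              then show "\<phi> n t = 0" by (simp add: \<phi>_def Sf_1)
            qed
            then show ?thesis using False2 by (simp add: tendsto_eventually)
          qed
        qed
        then have "(\<lambda>n. (indicator {a<..<b} t *\<^sub>R dv t) * \<phi> n t) \<longlonglongrightarrow> (indicator {a<..<b} t *\<^sub>R dv t) * indicator {x<..y} t"
          by (intro tendsto_mult tendsto_const)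
        then show "(\<lambda>n. (indicator {a<..<b} t *\<^sub>R dv t) * \<phi> n t) \<longlonglongrightarrow> indicator {x<..y} t *\<^sub>R (indicator {a<..<b} t *\<^sub>R dv t)"
          by (simp add: mult.commute)
      qed
    qed
    moreover have "integral\<^sup>L lebesgue (\<lambda>t. (indicator {a<..<b} t *\<^sub>R dv t) * \<phi> n t) = (LINT t:{a<..<b}|lebesgue. dv t * \<phi> n t)" for n
      unfolding set_lebesgue_integral_def by (simp add: mult_ac)
    moreover have "integral\<^sup>L lebesgue (\<lambda>t. indicator {x<..y} t *\<^sub>R (indicator {a<..<b} t *\<^sub>R dv t)) = (LINT t:{x<..y}|lebesgue. dv t)"
    proof -
      have e: "indicator {x<..y} t *\<^sub>R (indicator {a<..<b} t *\<^sub>R dv t) = indicator {x<..y} t *\<^sub>R dv t" for t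
        using ax yb by (auto simp: indicator_def)
      show ?thesis unfolding set_lebesgue_integral_def by (simp only: e)
    qed
    ultimately show ?thesis by simp
  qed
  have "(\<lambda>n. LINT t:{a<..<b}|lebesgue. v t * deriv (\<phi> n) t) \<longlonglongrightarrow> - (LINT t:{x<..y}|lebesgue. dv t)"
    unfolding weak by (intro tendsto_minus R)
  with L1 have "v x - v y = - (LINT t:{x<..y}|lebesgue. dv t)" by (rule LIMSEQ_unique)
  then show ?thesis by simp
qed

lemma test_fun_cont:
  assumes "test_fun a b \<phi>"
  shows "continuous_on UNIV \<phi>" "continuous_on UNIV (deriv \<phi>)"
proof -
  obtain F where F: "F 0 = \<phi>" "\<And>n x. (F n has_real_derivative F (Suc n) x) (at x)"
    using assms unfolding test_fun_def by blast
  have d1: "deriv \<phi> = F 1" using F by (intro ext DERIV_imp_deriv) auto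
  show "continuous_on UNIV \<phi>"
    using F by (metis DERIV_isCont continuous_at_imp_continuous_on)
  show "continuous_on UNIV (deriv \<phi>)"
    unfolding d1 using F(2)[of 1] by (metis DERIV_isCont continuous_at_imp_continuous_on)
qed

lemma H1_lin:
  assumes "H1 a b v dv" "H1 a b z dz"
  shows "H1 a b (\<lambda>x. v x + t * z x) (\<lambda>x. dv x + t * dz x)"
  unfolding H1_def
proof (intro conjI allI impI)
  show "L2 a b (\<lambda>x. v x + t * z x)" "L2 a b (\<lambda>x. dv x + t * dz x)"
    using assms by (auto simp: H1_def intro!: L2_add L2_cmult)
  show "continuous_on {a<..<b} (\<lambda>x. v x + t * z x)"
    using assms by (auto simp: H1_def intro!: continuous_intros)
  fix \<phi> assume tf: "test_fun a b \<phi>"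
  have L2d: "L2 a b (deriv \<phi>)" using test_fun_cont(2)[OF tf] by (intro L2_cont) (auto intro: continuous_on_subset)
  have L2p: "L2 a b \<phi>" using test_fun_cont(1)[OF tf] by (intro L2_cont) (auto intro: continuous_on_subset)
  have vL: "L2 a b v" "L2 a b z" "L2 a b dv" "L2 a b dz" using assms by (auto simp: H1_def)
  have i1: "set_integrable lebesgue {a<..<b} (\<lambda>x. v x * deriv \<phi> x)" by (rule L2_prod[OF vL(1) L2d])
  have i2: "set_integrable lebesgue {a<..<b} (\<lambda>x. t * (z x * deriv \<phi> x))"
    by (rule set_integrable_mult_right[OF L2_prod[OF vL(2) L2d]])
  have i3: "set_integrable lebesgue {a<..<b} (\<lambda>x. dv x * \<phi> x)" by (rule L2_prod[OF vL(3) L2p])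
  have i4: "set_integrable lebesgue {a<..<b} (\<lambda>x. t * (dz x * \<phi> x))"
    by (rule set_integrable_mult_right[OF L2_prod[OF vL(4) L2p]])
  have e1: "(\<lambda>x. (v x + t * z x) * deriv \<phi> x) = (\<lambda>x. v x * deriv \<phi> x + t * (z x * deriv \<phi> x))"
    by (rule ext) (simp add: algebra_simps)
  have e2: "(\<lambda>x. (dv x + t * dz x) * \<phi> x) = (\<lambda>x. dv x * \<phi> x + t * (dz x * \<phi> x))"
    by (rule ext) (simp add: algebra_simps)
  have "(LINT x:{a<..<b}|lebesgue. (v x + t * z x) * deriv \<phi> x)
      = (LINT x:{a<..<b}|lebesgue. v x * deriv \<phi> x) + t * (LINT x:{a<..<b}|lebesgue. z x * deriv \<phi> x)"
    by (simp only: e1 set_integral_add(2)[OF i1 i2] set_integral_mult_right)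
  also have "\<dots> = - (LINT x:{a<..<b}|lebesgue. dv x * \<phi> x) - t * (LINT x:{a<..<b}|lebesgue. dz x * \<phi> x)"
  proof -
    have "(LINT x:{a<..<b}|lebesgue. v x * deriv \<phi> x) = - (LINT x:{a<..<b}|lebesgue. dv x * \<phi> x)"
      using assms(1) tf unfolding H1_def by blast
    moreover have "(LINT x:{a<..<b}|lebesgue. z x * deriv \<phi> x) = - (LINT x:{a<..<b}|lebesgue. dz x * \<phi> x)"
      using assms(2) tf unfolding H1_def by blast
    ultimately show ?thesis by simp
  qed
  also have "\<dots> = - (LINT x:{a<..<b}|lebesgue. (dv x + t * dz x) * \<phi> x)"
    by (simp only: e2 set_integral_add(2)[OF i3 i4] set_integral_mult_right minus_add_distrib diff_conv_add_uminus)
  finally show "(LINT x:{a<..<b}|lebesgue. (v x + t * z x) * deriv \<phi> x) = - (LINT x:{a<..<b}|lebesgue. (dv x + t * dz x) * \<phi> x)" .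
qed

lemma measure_Ioc_leb: "x \<le> y \<Longrightarrow> measure lebesgue {x<..y} = y - (x::real)"
  by simp

lemma set_integral_const_Ioc: "x \<le> y \<Longrightarrow> (LINT t:{x<..y}|lebesgue. (c::real)) = c * (y - x)"
  using set_integral_const[of "{x<..y}" lebesgue c] by simp
lemma set_integral_const_Ioo: "x \<le> y \<Longrightarrow> (LINT t:{x<..<y}|lebesgue. (c::real)) = c * (y - x)"
  using set_integral_const[of "{x<..<y}" lebesgue c] by simp

lemma set_integral_subset_nonneg:
  assumes "set_integrable lebesgue B f" "A \<subseteq> B" "A \<in> sets lebesgue" "\<And>x. x \<in> B \<Longrightarrow> 0 \<le> (f x::real)"
  shows "(LINT x:A|lebesgue. f x) \<le> (LINT x:B|lebesgue. f x)"
proof -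
  have iA: "set_integrable lebesgue A f" using assms(1-3) by (meson set_integrable_subset)
  show ?thesis
    unfolding set_lebesgue_integral_def
  proof (rule integral_mono)
    show "integrable lebesgue (\<lambda>x. indicat_real A x *\<^sub>R f x)" using iA unfolding set_integrable_def .
    show "integrable lebesgue (\<lambda>x. indicat_real B x *\<^sub>R f x)" using assms(1) unfolding set_integrable_def .
    fix x show "indicat_real A x *\<^sub>R f x \<le> indicat_real B x *\<^sub>R f x"
      using assms(2) assms(4)[of x] by (auto simp: indicator_def)
  qed
qed

lemma seg_bound_lt:
  assumes H: "H1 a b v dv" and "a < x" "x < y" "y < b"
  shows "(v y - v x)^2 \<le> (y - x) * (LINT t:{a<..<b}|lebesgue. (dv t)^2)"
proof -
  let ?A = "{x<..y}"
  have dvL: "L2 a b dv" using H by (simp add: H1_def)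
  have sub: "?A \<subseteq> {a<..<b}" using assms by auto
  have i1: "set_integrable lebesgue ?A dv" by (rule set_integrable_subset[OF L2_L1[OF dvL] _ sub]) simp
  have i2: "set_integrable lebesgue ?A (\<lambda>t. (dv t)^2)" by (rule set_integrable_subset[OF L2_sq[OF dvL] _ sub]) simp
  define S where "S = (LINT t:?A|lebesgue. dv t)"
  define \<mu> where "\<mu> = y - x"
  have \<mu>: "\<mu> > 0" using assms by (simp add: \<mu>_def)
  define k where "k = S / \<mu>"
  have pw: "2 * k * dv t \<le> (dv t)^2 + k^2" for t
  proof -
    have "0 \<le> (dv t - k)^2" by simp
    then show ?thesis by (simp add: power2_eq_square algebra_simps)
  qed
  have ic: "set_integrable lebesgue ?A (\<lambda>t. c)" for c :: real
  proof -
    have "set_integrable lebesgue {x..y} (\<lambda>t. c)" by (rule absolutely_integrable_continuous_real) simp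
    then show ?thesis by (rule set_integrable_subset) auto
  qed
  have "(LINT t:?A|lebesgue. 2 * k * dv t) \<le> (LINT t:?A|lebesgue. (dv t)^2 + k^2)"
    by (rule set_integral_mono[OF set_integrable_mult_right[OF i1] set_integral_add(1)[OF i2 ic] pw])
  also have "\<dots> = (LINT t:?A|lebesgue. (dv t)^2) + k^2 * \<mu>"
    using assms by (simp only: set_integral_add(2)[OF i2 ic] set_integral_const_Ioc \<mu>_def)
  finally have "2 * k * S \<le> (LINT t:?A|lebesgue. (dv t)^2) + k^2 * \<mu>"
    by (simp add: S_def set_integral_mult_right mult.assoc)
  then have "2 * S^2 / \<mu> \<le> (LINT t:?A|lebesgue. (dv t)^2) + S^2 / \<mu>"
    using \<mu> by (simp add: k_def power2_eq_square)
  then have "S^2 \<le> \<mu> * (LINT t:?A|lebesgue. (dv t)^2)"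
    using \<mu> by (simp add: field_simps)
  also have "\<dots> \<le> \<mu> * (LINT t:{a<..<b}|lebesgue. (dv t)^2)"
    using \<mu> L2_sq[OF dvL] sub by (intro mult_left_mono set_integral_subset_nonneg) auto
  finally show ?thesis using H1_FTC[OF H assms(2-4)] by (simp add: S_def \<mu>_def)
qed

lemma L2_int_nonneg: "L2 a b f \<Longrightarrow> 0 \<le> (LINT t:{a<..<b}|lebesgue. (f t)^2)"
  unfolding set_lebesgue_integral_def by (rule integral_nonneg_AE) (simp add: indicator_def)

lemma seg_bound:
  assumes H: "H1 a b v dv" and "x \<in> {a<..<b}" "y \<in> {a<..<b}"
  shows "(v y - v x)^2 \<le> \<bar>y - x\<bar> * (LINT t:{a<..<b}|lebesgue. (dv t)^2)"
proof -
  consider "x < y" | "x = y" | "y < x" by linarith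
  then show ?thesis
  proof cases
    case 1 then show ?thesis using seg_bound_lt[OF H, of x y] assms by auto
  next
    case 2 then show ?thesis using L2_int_nonneg[of a b dv] H by (simp add: H1_def)
  next
    case 3 then show ?thesis using seg_bound_lt[OF H, of y x] assms by (auto simp: power2_commute)
  qed
qed

lemma sup_bound:
  assumes H: "H1 a b v dv" and x: "x \<in> {a<..<b}"
  shows "(v x)^2 \<le> 2 / (b - a) * (LINT t:{a<..<b}|lebesgue. (v t)^2) + 2 * (b - a) * (LINT t:{a<..<b}|lebesgue. (dv t)^2)"
proof -
  let ?I = "{a<..<b}"
  let ?Nd = "LINT t:?I|lebesgue. (dv t)^2"
  have vL: "L2 a b v" and dvL: "L2 a b dv" using H by (auto simp: H1_def)
  have ab: "a < b" using x by auto
  have pw: "(v x)^2 \<le> 2 * (v y)^2 + 2 * (b - a) * ?Nd" if y: "y \<in> ?I" for y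
  proof -
    have "(v x)^2 \<le> 2 * (v y)^2 + 2 * (v x - v y)^2"
    proof -
      have "0 \<le> (v x - 2 * v y)^2" by simp
      then show ?thesis by (simp add: power2_eq_square algebra_simps)
    qed
    also have "(v x - v y)^2 \<le> \<bar>x - y\<bar> * ?Nd" using seg_bound[OF H y x] .
    also have "\<bar>x - y\<bar> * ?Nd \<le> (b - a) * ?Nd"
      using x y L2_int_nonneg[OF dvL] by (intro mult_right_mono) auto
    finally show ?thesis by (simp add: algebra_simps)
  qed
  have "(LINT y:?I|lebesgue. (v x)^2) \<le> (LINT y:?I|lebesgue. 2 * (v y)^2 + 2 * (b - a) * ?Nd)"
    using pw L2_sq[OF vL] by (intro set_integral_mono set_integral_add set_integrable_mult_right) (auto intro: L2_L1 L2_const)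
  also have "\<dots> = 2 * (LINT y:?I|lebesgue. (v y)^2) + 2 * (b - a) * ?Nd * (b - a)"
    by (simp only: set_integral_add(2)[OF set_integrable_mult_right[OF L2_sq[OF vL]] L2_L1[OF L2_const]]
        set_integral_mult_right set_integral_const_Ioo[OF less_imp_le[OF ab]])
  also have "\<dots> = 2 * (LINT y:?I|lebesgue. (v y)^2) + (b - a) * (2 * (b - a) * ?Nd)"
    by (simp only: mult.commute)
  finally have "(v x)^2 * (b - a) \<le> 2 * (LINT y:?I|lebesgue. (v y)^2) + (b - a) * (2 * (b - a) * ?Nd)"
    by (simp only: set_integral_const_Ioo[OF less_imp_le[OF ab]])
  then have "(b - a) * (v x)^2 \<le> 2 * (LINT y:?I|lebesgue. (v y)^2) + (b - a) * (2 * (b - a) * ?Nd)"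
    by (simp only: mult.commute)
  then have "(v x)^2 \<le> (2 * (LINT y:?I|lebesgue. (v y)^2) + (b - a) * (2 * (b - a) * ?Nd)) / (b - a)"
    using ab by (simp add: field_simps)
  also have "\<dots> = 2 / (b - a) * (LINT t:?I|lebesgue. (v t)^2) + 2 * (b - a) * ?Nd"
    using ab by (simp add: field_simps)
  finally show ?thesis .
qed

lemma tanh_gt_m1: "tanh (x::real) > -1"
  using tanh_real_lt_1[of "-x"] by (simp add: tanh_minus)

lemma tanh_sq_le1: "(tanh (x::real))^2 \<le> 1"
proof -
  have "\<bar>tanh x\<bar> \<le> 1" using tanh_real_lt_1[of x] tanh_gt_m1[of x] by auto
  then show ?thesis by (simp add: abs_square_le_1)
qed

definition Phi :: "real \<Rightarrow> real \<Rightarrow> real \<Rightarrow> real" where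
  "Phi \<epsilon> c x = (1 + tanh ((x - c) / \<epsilon>)) / 2"
definition dPhi :: "real \<Rightarrow> real \<Rightarrow> real \<Rightarrow> real" where
  "dPhi \<epsilon> c x = (1 - (tanh ((x - c) / \<epsilon>))^2) / (2 * \<epsilon>)"

lemma Phi_bounds: "0 \<le> Phi \<epsilon> c x" "Phi \<epsilon> c x \<le> 1"
  using tanh_real_lt_1[of "(x - c) / \<epsilon>"] tanh_gt_m1[of "(x - c) / \<epsilon>"] by (auto simp: Phi_def)

lemma dPhi_nonneg: "\<epsilon> > 0 \<Longrightarrow> 0 \<le> dPhi \<epsilon> c x"
  using tanh_sq_le1[of "(x - c) / \<epsilon>"] by (simp add: dPhi_def)

lemma Phi_deriv: "\<epsilon> > 0 \<Longrightarrow> (Phi \<epsilon> c has_real_derivative dPhi \<epsilon> c x) (at x)"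
  unfolding Phi_def[abs_def] dPhi_def
  by (auto intro!: derivative_eq_intros simp: cosh_real_pos[THEN less_imp_neq, THEN not_sym] field_simps)

lemma dPhi_cont: "continuous_on A (dPhi \<epsilon> c)"
proof (cases "\<epsilon> = 0")
  case True then show ?thesis by (simp add: dPhi_def[abs_def])
next
  case False then show ?thesis unfolding dPhi_def[abs_def]
  by (intro continuous_intros) (auto simp: cosh_real_pos[THEN less_imp_neq, THEN not_sym])
qed

lemma dPhi_integral:
  assumes "\<epsilon> > 0" "l \<le> r"
  shows "(dPhi \<epsilon> c has_integral (Phi \<epsilon> c r - Phi \<epsilon> c l)) {l..r}"
  by (rule fundamental_theorem_of_calculus[OF assms(2)])
     (auto intro!: DERIV_subset[OF Phi_deriv[OF assms(1)], unfolded has_real_derivative_iff_has_vector_derivative])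

lemma sqrt_dPhi_piece:
  assumes "\<epsilon> > 0" "p \<le> q" "\<And>x. x \<in> {p..q} \<Longrightarrow> sqrt \<bar>x - c\<bar> \<le> K"
  shows "integral {p..q} (\<lambda>x. sqrt \<bar>x - c\<bar> * dPhi \<epsilon> c x) \<le> K * (Phi \<epsilon> c q - Phi \<epsilon> c p)"
proof -
  have "integral {p..q} (\<lambda>x. sqrt \<bar>x - c\<bar> * dPhi \<epsilon> c x) \<le> integral {p..q} (\<lambda>x. K * dPhi \<epsilon> c x)"
  proof (rule integral_le)
    show "(\<lambda>x. sqrt \<bar>x - c\<bar> * dPhi \<epsilon> c x) integrable_on {p..q}"
      by (rule integrable_continuous_real) (intro continuous_intros dPhi_cont)
    show "(\<lambda>x. K * dPhi \<epsilon> c x) integrable_on {p..q}"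
      by (rule integrable_continuous_real) (intro continuous_intros dPhi_cont)
    fix x assume "x \<in> {p..q}"
    then show "sqrt \<bar>x - c\<bar> * dPhi \<epsilon> c x \<le> K * dPhi \<epsilon> c x"
      using assms(3) dPhi_nonneg[OF assms(1)] by (intro mult_right_mono) auto
  qed
  also have "\<dots> = K * (Phi \<epsilon> c q - Phi \<epsilon> c p)"
    using integral_unique[OF dPhi_integral[OF assms(1,2)]] by simp
  finally show ?thesis .
qed

lemma Phi_at: "Phi \<epsilon> c (c - \<eta>) = (1 - tanh (\<eta> / \<epsilon>)) / 2" "Phi \<epsilon> c (c + \<eta>) = (1 + tanh (\<eta> / \<epsilon>)) / 2"
  by (auto simp: Phi_def tanh_minus)

lemma T_bound:
  assumes \<epsilon>: "\<epsilon> > 0" and \<eta>: "\<eta> > 0" and lc: "l + \<eta> \<le> c" and cr: "c + \<eta> \<le> r"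
  shows "integral {l..r} (\<lambda>x. sqrt \<bar>x - c\<bar> * dPhi \<epsilon> c x) \<le> sqrt \<eta> + sqrt (r - l) * (1 - tanh (\<eta> / \<epsilon>))"
proof -
  let ?g = "\<lambda>x. sqrt \<bar>x - c\<bar> * dPhi \<epsilon> c x"
  have int: "?g integrable_on {p..q}" for p q
    by (rule integrable_continuous_real) (intro continuous_intros dPhi_cont)
  have split: "integral {l..r} ?g = integral {l..c-\<eta>} ?g + integral {c-\<eta>..c+\<eta>} ?g + integral {c+\<eta>..r} ?g"
  proof -
    have "integral {l..c+\<eta>} ?g = integral {l..c-\<eta>} ?g + integral {c-\<eta>..c+\<eta>} ?g"
      using Henstock_Kurzweil_Integration.integral_combine[OF _ _ int, of l "c - \<eta>" "c + \<eta>"] lc \<eta> by simp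
    moreover have "integral {l..r} ?g = integral {l..c+\<eta>} ?g + integral {c+\<eta>..r} ?g"
      using Henstock_Kurzweil_Integration.integral_combine[OF _ _ int, of l "c + \<eta>" r] lc cr \<eta> by simp
    ultimately show ?thesis by simp
  qed
  have sl: "sqrt \<bar>x - c\<bar> \<le> sqrt (r - l)" if "x \<in> {l..r}" for x
    using that lc cr \<eta> by (auto intro: real_sqrt_le_mono)
  have p1: "integral {l..c-\<eta>} ?g \<le> sqrt (r - l) * (Phi \<epsilon> c (c - \<eta>) - Phi \<epsilon> c l)"
    by (rule sqrt_dPhi_piece[OF \<epsilon>]) (use lc cr \<eta> sl in auto)
  have p2: "integral {c-\<eta>..c+\<eta>} ?g \<le> sqrt \<eta> * (Phi \<epsilon> c (c + \<eta>) - Phi \<epsilon> c (c - \<eta>))"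
    by (rule sqrt_dPhi_piece[OF \<epsilon>]) (use \<eta> in \<open>auto intro: real_sqrt_le_mono\<close>)
  have p3: "integral {c+\<eta>..r} ?g \<le> sqrt (r - l) * (Phi \<epsilon> c r - Phi \<epsilon> c (c + \<eta>))"
    by (rule sqrt_dPhi_piece[OF \<epsilon>]) (use lc cr \<eta> sl in auto)
  have q1: "sqrt (r - l) * (Phi \<epsilon> c (c - \<eta>) - Phi \<epsilon> c l) \<le> sqrt (r - l) * ((1 - tanh (\<eta> / \<epsilon>)) / 2)"
    using Phi_bounds[of \<epsilon> c l] Phi_at(1)[of \<epsilon> c \<eta>] lc cr \<eta> by (intro mult_left_mono) auto
  have q2: "sqrt \<eta> * (Phi \<epsilon> c (c + \<eta>) - Phi \<epsilon> c (c - \<eta>)) \<le> sqrt \<eta> * 1"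
    using Phi_bounds[of \<epsilon> c "c + \<eta>"] Phi_bounds[of \<epsilon> c "c - \<eta>"] \<eta> by (intro mult_left_mono) auto
  have q3: "sqrt (r - l) * (Phi \<epsilon> c r - Phi \<epsilon> c (c + \<eta>)) \<le> sqrt (r - l) * ((1 - tanh (\<eta> / \<epsilon>)) / 2)"
    using Phi_bounds[of \<epsilon> c r] Phi_at(2)[of \<epsilon> c \<eta>] lc cr \<eta> by (intro mult_left_mono) auto
  show ?thesis using split p1 p2 p3 q1 q2 q3 by (simp add: field_simps)
qed

lemma delta_est:
  assumes \<epsilon>: "\<epsilon> > 0" and \<eta>: "\<eta> > 0" and lc: "l + \<eta> \<le> c" and cr: "c + \<eta> \<le> r"
    and Fi: "(\<lambda>x. F x * dPhi \<epsilon> c x) integrable_on {l..r}"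
    and Fb: "\<And>x. x \<in> {l<..<r} \<Longrightarrow> \<bar>F x - F c\<bar> \<le> C * sqrt \<bar>x - c\<bar>" and C: "C \<ge> 0"
  shows "\<bar>integral {l..r} (\<lambda>x. F x * dPhi \<epsilon> c x) - F c\<bar>
    \<le> C * (sqrt \<eta> + sqrt (r - l) * (1 - tanh (\<eta> / \<epsilon>))) + \<bar>F c\<bar> * \<bar>Phi \<epsilon> c r - Phi \<epsilon> c l - 1\<bar>"
proof -
  have lr: "l \<le> r" using lc cr \<eta> by simp
  have iD: "(\<lambda>x. F c * dPhi \<epsilon> c x) integrable_on {l..r}"
    by (rule integrable_continuous_real) (intro continuous_intros dPhi_cont)
  have iS: "(\<lambda>x. C * (sqrt \<bar>x - c\<bar> * dPhi \<epsilon> c x)) integrable_on {l..r}"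
    by (rule integrable_continuous_real) (intro continuous_intros dPhi_cont)
  have iDiff: "(\<lambda>x. F x * dPhi \<epsilon> c x - F c * dPhi \<epsilon> c x) integrable_on {l..r}"
    by (rule integrable_diff[OF Fi iD])
  have ID: "integral {l..r} (\<lambda>x. F c * dPhi \<epsilon> c x) = F c * (Phi \<epsilon> c r - Phi \<epsilon> c l)"
    using integral_unique[OF dPhi_integral[OF \<epsilon> lr]] by simp
  have eq: "integral {l..r} (\<lambda>x. F x * dPhi \<epsilon> c x) - F c
      = integral {l..r} (\<lambda>x. F x * dPhi \<epsilon> c x - F c * dPhi \<epsilon> c x) + F c * (Phi \<epsilon> c r - Phi \<epsilon> c l - 1)"
    using integral_diff[OF Fi iD] ID by (simp add: algebra_simps)
  have "\<bar>integral {l..r} (\<lambda>x. F x * dPhi \<epsilon> c x - F c * dPhi \<epsilon> c x)\<bar>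
      = norm (integral {l<..<r} (\<lambda>x. F x * dPhi \<epsilon> c x - F c * dPhi \<epsilon> c x))"
    by (simp add: integral_open_interval_real)
  also have "\<dots> \<le> integral {l<..<r} (\<lambda>x. C * (sqrt \<bar>x - c\<bar> * dPhi \<epsilon> c x))"
  proof (rule integral_norm_bound_integral)
    show "(\<lambda>x. F x * dPhi \<epsilon> c x - F c * dPhi \<epsilon> c x) integrable_on {l<..<r}"
      using iDiff by (simp add: integrable_on_open_interval_real)
    show "(\<lambda>x. C * (sqrt \<bar>x - c\<bar> * dPhi \<epsilon> c x)) integrable_on {l<..<r}"
      using iS by (simp add: integrable_on_open_interval_real)
    fix x assume x: "x \<in> {l<..<r}"
    have "norm (F x * dPhi \<epsilon> c x - F c * dPhi \<epsilon> c x) = \<bar>F x - F c\<bar> * dPhi \<epsilon> c x"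
      using dPhi_nonneg[OF \<epsilon>, of c x] by (simp add: left_diff_distrib[symmetric] abs_mult)
    also have "\<dots> \<le> C * sqrt \<bar>x - c\<bar> * dPhi \<epsilon> c x"
      using Fb[OF x] dPhi_nonneg[OF \<epsilon>, of c x] by (intro mult_right_mono) auto
    finally show "norm (F x * dPhi \<epsilon> c x - F c * dPhi \<epsilon> c x) \<le> C * (sqrt \<bar>x - c\<bar> * dPhi \<epsilon> c x)"
      by (simp add: mult.assoc)
  qed
  also have "\<dots> = C * integral {l..r} (\<lambda>x. sqrt \<bar>x - c\<bar> * dPhi \<epsilon> c x)"
    by (simp add: integral_open_interval_real[symmetric])
  also have "\<dots> \<le> C * (sqrt \<eta> + sqrt (r - l) * (1 - tanh (\<eta> / \<epsilon>)))"
    using T_bound[OF \<epsilon> \<eta> lc cr] C by (intro mult_left_mono) auto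
  finally have b1: "\<bar>integral {l..r} (\<lambda>x. F x * dPhi \<epsilon> c x - F c * dPhi \<epsilon> c x)\<bar>
      \<le> C * (sqrt \<eta> + sqrt (r - l) * (1 - tanh (\<eta> / \<epsilon>)))" .
  have "\<bar>F c * (Phi \<epsilon> c r - Phi \<epsilon> c l - 1)\<bar> = \<bar>F c\<bar> * \<bar>Phi \<epsilon> c r - Phi \<epsilon> c l - 1\<bar>"
    by (simp add: abs_mult)
  then show ?thesis using eq b1 by linarith
qed

lemma sdist_min: "a1 < b1 \<Longrightarrow> sdist a1 b1 x = min (x - a1) (b1 - x)"
  by (auto simp: sdist_def min_def abs_if)

lemma phi_eq: "a1 < b1 \<Longrightarrow> phi_eps a1 b1 \<epsilon> x = (1 + tanh (min (x - a1) (b1 - x) / \<epsilon>)) / 2"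
  by (simp add: phi_eps_def sdist_min)

lemma phi_bounds: "0 \<le> phi_eps a1 b1 \<epsilon> x" "phi_eps a1 b1 \<epsilon> x \<le> 1"
  using tanh_real_lt_1[of "sdist a1 b1 x / \<epsilon>"] tanh_gt_m1[of "sdist a1 b1 x / \<epsilon>"]
  by (auto simp: phi_eps_def)

lemma phi_cont: "a1 < b1 \<Longrightarrow> \<epsilon> > 0 \<Longrightarrow> continuous_on A (phi_eps a1 b1 \<epsilon>)"
proof -
  assume "a1 < b1" "\<epsilon> > 0"
  then have "phi_eps a1 b1 \<epsilon> = (\<lambda>x. (1 + tanh (min (x - a1) (b1 - x) / \<epsilon>)) / 2)"
    by (intro ext phi_eq)
  then show ?thesis using \<open>\<epsilon> > 0\<close>
    by (simp only:) (intro continuous_intros, auto simp: cosh_real_pos[THEN less_imp_neq, THEN not_sym])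
qed

lemma flip_div: "((b::real) - x) / \<epsilon> = - ((x - b) / \<epsilon>)"
proof -
  have "(b - x) / \<epsilon> = (- (x - b)) / \<epsilon>" by simp
  also have "\<dots> = - ((x - b) / \<epsilon>)" by (simp only: minus_divide_left)
  finally show ?thesis .
qed

lemma tanh_flip: "tanh (((b::real) - x) / \<epsilon>) = - tanh ((x - b) / \<epsilon>)"
  by (subst flip_div) (rule tanh_minus)

definition Wt :: "real \<Rightarrow> real \<Rightarrow> real \<Rightarrow> real \<Rightarrow> real" where
  "Wt a1 b1 \<epsilon> x = (1 - (tanh (sdist a1 b1 x / \<epsilon>))^2) / (2 * \<epsilon>)"

lemma Wt_cont: "a1 < b1 \<Longrightarrow> \<epsilon> > 0 \<Longrightarrow> continuous_on A (Wt a1 b1 \<epsilon>)"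
  unfolding Wt_def[abs_def] sdist_min
  by (intro continuous_intros) (auto simp: cosh_real_pos[THEN less_imp_neq, THEN not_sym])

lemma Wt_bounds: "\<epsilon> > 0 \<Longrightarrow> 0 \<le> Wt a1 b1 \<epsilon> x" "\<epsilon> > 0 \<Longrightarrow> Wt a1 b1 \<epsilon> x \<le> 1 / (2 * \<epsilon>)"
  using tanh_sq_le1[of "sdist a1 b1 x / \<epsilon>"] by (auto simp: Wt_def divide_right_mono)

lemma Wt_left: "a1 < b1 \<Longrightarrow> x \<le> (a1 + b1) / 2 \<Longrightarrow> Wt a1 b1 \<epsilon> x = dPhi \<epsilon> a1 x"
  by (simp add: Wt_def dPhi_def sdist_min min_def)

lemma Wt_right: "a1 < b1 \<Longrightarrow> x \<ge> (a1 + b1) / 2 \<Longrightarrow> Wt a1 b1 \<epsilon> x = dPhi \<epsilon> b1 x"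
proof -
  assume "a1 < b1" "x \<ge> (a1 + b1) / 2"
  then have "sdist a1 b1 x = - (x - b1)" by (simp add: sdist_min min_def)
  moreover have "sdist a1 b1 x / \<epsilon> = - ((x - b1) / \<epsilon>)" using calculation flip_div[of b1 x \<epsilon>] by simp
  ultimately show ?thesis by (simp only: Wt_def dPhi_def tanh_minus) simp
qed

lemma deriv_phi_abs:
  assumes ab: "a1 < b1" and \<epsilon>: "\<epsilon> > 0" and xm: "x \<noteq> (a1 + b1) / 2"
  shows "\<bar>deriv (phi_eps a1 b1 \<epsilon>) x\<bar> = Wt a1 b1 \<epsilon> x"
proof (cases "x < (a1 + b1) / 2")
  case True
  have "(phi_eps a1 b1 \<epsilon> has_real_derivative dPhi \<epsilon> a1 x) (at x)"
  proof (rule has_field_derivative_transform_within_open[OF Phi_deriv[OF \<epsilon>], where a=x and S="{..<(a1+b1)/2}"])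
    fix y assume "y \<in> {..<(a1+b1)/2}"
    then show "Phi \<epsilon> a1 y = phi_eps a1 b1 \<epsilon> y" using ab by (simp add: phi_eq Phi_def min_def)
  qed (use True in auto)
  then have "deriv (phi_eps a1 b1 \<epsilon>) x = dPhi \<epsilon> a1 x" by (rule DERIV_imp_deriv)
  then show ?thesis using dPhi_nonneg[OF \<epsilon>] Wt_left[OF ab, of x \<epsilon>] True by simp
next
  case False
  then have xg: "x > (a1 + b1) / 2" using xm by simp
  have "((\<lambda>y. 1 - Phi \<epsilon> b1 y) has_real_derivative - dPhi \<epsilon> b1 x) (at x)"
    using Phi_deriv[OF \<epsilon>] by (auto intro!: derivative_eq_intros)
  then have "(phi_eps a1 b1 \<epsilon> has_real_derivative - dPhi \<epsilon> b1 x) (at x)"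
  proof (rule has_field_derivative_transform_within_open[where a=x and S="{(a1+b1)/2<..}"])
    fix y assume "y \<in> {(a1+b1)/2<..}"
    then have "min (y - a1) (b1 - y) = - (y - b1)" using ab by (simp add: min_def)
    then show "1 - Phi \<epsilon> b1 y = phi_eps a1 b1 \<epsilon> y" using ab by (simp add: phi_eq Phi_def tanh_flip[of b1 y] field_simps)
  qed (use xg in auto)
  then have "deriv (phi_eps a1 b1 \<epsilon>) x = - dPhi \<epsilon> b1 x" by (rule DERIV_imp_deriv)
  then show ?thesis using dPhi_nonneg[OF \<epsilon>] Wt_right[OF ab, of x \<epsilon>] xg by simp
qed

lemma lim_pos: "s > 0 \<Longrightarrow> ((\<lambda>\<epsilon>. tanh (s / \<epsilon>)) \<longlongrightarrow> 1) (at_right (0::real))"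
proof -
  assume "s > 0"
  then have "filterlim (\<lambda>\<epsilon>::real. s / \<epsilon>) at_top (at_right 0)" by real_asymp
  then show ?thesis by (rule filterlim_compose[OF tanh_real_at_top])
qed

lemma lim_neg: "s < 0 \<Longrightarrow> ((\<lambda>\<epsilon>. tanh (s / \<epsilon>)) \<longlongrightarrow> -1) (at_right (0::real))"
proof -
  assume "s < 0"
  then have "((\<lambda>\<epsilon>. tanh ((-s) / \<epsilon>)) \<longlongrightarrow> 1) (at_right (0::real))" by (intro lim_pos) simp
  then have "((\<lambda>\<epsilon>. - tanh ((-s) / \<epsilon>)) \<longlongrightarrow> -1) (at_right (0::real))" by (rule tendsto_minus)
  then show ?thesis by (simp add: tanh_minus)
qed

lemma phi_lim:
  assumes ab: "a1 < b1" and x: "x \<noteq> a1" "x \<noteq> b1"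
  shows "((\<lambda>\<epsilon>. phi_eps a1 b1 \<epsilon> x) \<longlongrightarrow> indicator {a1<..<b1} x) (at_right 0)"
proof (cases "x \<in> {a1<..<b1}")
  case True
  then have "sdist a1 b1 x > 0" using ab by (simp add: sdist_min)
  then have "((\<lambda>\<epsilon>. (1 + tanh (sdist a1 b1 x / \<epsilon>)) / 2) \<longlongrightarrow> (1 + 1) / 2) (at_right 0)"
    by (intro tendsto_intros lim_pos) auto
  then show ?thesis using True by (simp add: phi_eps_def[abs_def])
next
  case False
  then have "sdist a1 b1 x < 0" using ab x by (auto simp: sdist_min min_def)
  then have "((\<lambda>\<epsilon>. (1 + tanh (sdist a1 b1 x / \<epsilon>)) / 2) \<longlongrightarrow> (1 + -1) / 2) (at_right 0)"
    by (intro tendsto_intros lim_neg) auto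
  then show ?thesis using False by (simp add: phi_eps_def[abs_def])
qed

lemma rho_DCT:
  assumes ab: "a1 < b1" and HL: "L2 a b H" and epos: "\<And>k. e k > 0" and e0: "e \<longlonglongrightarrow> 0"
  shows "(\<lambda>k. LINT x:{a<..<b}|lebesgue. (phi_eps a1 b1 (e k) x - indicator {a1<..<b1} x)^2 * (H x)^2) \<longlonglongrightarrow> 0"
proof -
  have fe: "filterlim e (at_right 0) sequentially"
    using e0 epos by (intro tendsto_imp_filterlim_at_right) auto
  have Hm: "(\<lambda>x. indicator {a<..<b} x *\<^sub>R (H x)^2) \<in> borel_measurable lebesgue"
    using L2_sq[OF HL] unfolding set_integrable_def by (rule borel_measurable_integrable)
  have pm: "(\<lambda>x. (phi_eps a1 b1 (e k) x - indicator {a1<..<b1} x)^2) \<in> borel_measurable lebesgue" for k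
  proof -
    have "phi_eps a1 b1 (e k) \<in> borel_measurable borel"
      using phi_cont[OF ab epos] by (rule borel_measurable_continuous_onI)
    then show ?thesis by (intro borel_measurable_power borel_measurable_diff bm_leb) auto
  qed
  have "(\<lambda>k. integral\<^sup>L lebesgue (\<lambda>x. (phi_eps a1 b1 (e k) x - indicator {a1<..<b1} x)^2 * (indicator {a<..<b} x *\<^sub>R (H x)^2)))
      \<longlonglongrightarrow> integral\<^sup>L lebesgue (\<lambda>x::real. 0::real)"
  proof (rule integral_dominated_convergence[where w="\<lambda>x. indicator {a<..<b} x *\<^sub>R (H x)^2"])
    show "(\<lambda>x. 0::real) \<in> borel_measurable lebesgue" by simp
    show "(\<lambda>x. (phi_eps a1 b1 (e k) x - indicator {a1<..<b1} x)^2 * (indicator {a<..<b} x *\<^sub>R (H x)^2)) \<in> borel_measurable lebesgue" for k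
      using pm Hm by (rule borel_measurable_times)
    show "integrable lebesgue (\<lambda>x. indicator {a<..<b} x *\<^sub>R (H x)^2)"
      using L2_sq[OF HL] unfolding set_integrable_def .
    show "AE x in lebesgue. norm ((phi_eps a1 b1 (e k) x - indicator {a1<..<b1} x)^2 * (indicator {a<..<b} x *\<^sub>R (H x)^2)) \<le> indicator {a<..<b} x *\<^sub>R (H x)^2" for k
    proof (rule AE_I2)
      fix x
      have "(phi_eps a1 b1 (e k) x - indicator {a1<..<b1} x)^2 \<le> 1"
        using phi_bounds[of a1 b1 "e k" x] by (auto simp: indicator_def abs_square_le_1)
      then show "norm ((phi_eps a1 b1 (e k) x - indicator {a1<..<b1} x)^2 * (indicator {a<..<b} x *\<^sub>R (H x)^2)) \<le> indicator {a<..<b} x *\<^sub>R (H x)^2"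
        by (auto simp: abs_mult indicator_def intro!: mult_left_le_one_le)
    qed
    show "AE x in lebesgue. (\<lambda>k. (phi_eps a1 b1 (e k) x - indicator {a1<..<b1} x)^2 * (indicator {a<..<b} x *\<^sub>R (H x)^2)) \<longlonglongrightarrow> 0"
      using AE_leb_ne[of a1] AE_leb_ne[of b1]
    proof eventually_elim
      case (elim x)
      have "(\<lambda>k. phi_eps a1 b1 (e k) x) \<longlonglongrightarrow> indicator {a1<..<b1} x"
        using filterlim_compose[OF phi_lim[OF ab elim(1,2)] fe] by simp
      then have "(\<lambda>k. (phi_eps a1 b1 (e k) x - indicator {a1<..<b1} x)^2 * (indicator {a<..<b} x *\<^sub>R (H x)^2))
          \<longlonglongrightarrow> (indicator {a1<..<b1} x - indicator {a1<..<b1} x)^2 * (indicator {a<..<b} x *\<^sub>R (H x)^2)"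
        by (intro tendsto_intros)
      then show ?case by simp
    qed
  qed
  then show ?thesis unfolding set_lebesgue_integral_def by (simp add: mult_ac)
qed

lemma int_tri:
  assumes "L2 a b f" "L2 a b g" "D \<in> borel_measurable borel" "\<And>x. x \<in> {a<..<b} \<Longrightarrow> \<bar>D x\<bar> \<le> B"
  shows "set_integrable lebesgue {a<..<b} (\<lambda>x. D x * f x * g x)"
  using L2_prod[OF L2_borel_bdd_mult[OF assms(1,3,4)] assms(2)] by simp

lemma int_trisq:
  assumes "L2 a b f" "D \<in> borel_measurable borel" "\<And>x. x \<in> {a<..<b} \<Longrightarrow> \<bar>D x\<bar> \<le> B"
  shows "set_integrable lebesgue {a<..<b} (\<lambda>x. D x * (f x)^2)"
  using int_tri[OF assms(1) assms(1) assms(2,3)] by (simp add: power2_eq_square mult.assoc)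

lemma quad_expand:
  assumes u: "L2 a b u" "L2 a b du" and z: "L2 a b z" "L2 a b dz" and f: "L2 a b f"
    and D: "D \<in> borel_measurable borel" "\<And>x. x \<in> {a<..<b} \<Longrightarrow> \<bar>D x\<bar> \<le> BD"
    and c: "c \<in> borel_measurable borel" "\<And>x. x \<in> {a<..<b} \<Longrightarrow> \<bar>c x\<bar> \<le> BC"
  shows "(LINT x:{a<..<b}|lebesgue. (1/2) * (D x * (du x + t * dz x)^2 + c x * (u x + t * z x)^2) - f x * (u x + t * z x))
    = (LINT x:{a<..<b}|lebesgue. (1/2) * (D x * (du x)^2 + c x * (u x)^2) - f x * u x)
      + t * (LINT x:{a<..<b}|lebesgue. D x * du x * dz x + c x * u x * z x - f x * z x)
      + t^2 * (LINT x:{a<..<b}|lebesgue. (1/2) * (D x * (dz x)^2 + c x * (z x)^2))"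
proof -
  let ?I = "{a<..<b}"
  have iA: "set_integrable lebesgue ?I (\<lambda>x. (1/2) * (D x * (du x)^2 + c x * (u x)^2) - f x * u x)"
    by (intro set_integral_diff(1) set_integrable_mult_right set_integral_add(1) int_trisq[OF u(2) D] int_trisq[OF u(1) c] L2_prod f u)
  have iB: "set_integrable lebesgue ?I (\<lambda>x. D x * du x * dz x + c x * u x * z x - f x * z x)"
    by (intro set_integral_diff(1) set_integral_add(1) int_tri[OF u(2) z(2) D] int_tri[OF u(1) z(1) c] L2_prod f z)
  have iC: "set_integrable lebesgue ?I (\<lambda>x. (1/2) * (D x * (dz x)^2 + c x * (z x)^2))"
    by (intro set_integrable_mult_right set_integral_add(1) int_trisq[OF z(2) D] int_trisq[OF z(1) c])
  have pw: "(\<lambda>x. (1/2) * (D x * (du x + t * dz x)^2 + c x * (u x + t * z x)^2) - f x * (u x + t * z x))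
    = (\<lambda>x. ((1/2) * (D x * (du x)^2 + c x * (u x)^2) - f x * u x)
      + t * (D x * du x * dz x + c x * u x * z x - f x * z x)
      + t^2 * ((1/2) * (D x * (dz x)^2 + c x * (z x)^2)))"
    by (rule ext) (simp add: algebra_simps power2_eq_square)
  show ?thesis
    unfolding pw
    by (simp only: set_integral_add(2)[OF set_integral_add(1)[OF iA set_integrable_mult_right[OF iB]] set_integrable_mult_right[OF iC]]
        set_integral_add(2)[OF iA set_integrable_mult_right[OF iB]] set_integral_mult_right)
qed

lemma nonneg_quad_imp_zero:
  fixes L Q :: real
  assumes "\<And>t. 0 \<le> t * L + t^2 * Q"
  shows "L = 0"
proof (rule ccontr)
  assume L: "L \<noteq> 0"
  define R where "R = \<bar>Q\<bar> + 1"
  have pos: "R > 0" "Q \<le> R" by (auto simp: R_def)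
  define t where "t = - L / (2 * R)"
  have "t * L + t^2 * Q \<le> t * L + t^2 * R"
    using pos by (intro add_left_mono mult_left_mono) auto
  also have "\<dots> = -(L * L) / (4 * R)"
    using pos by (simp add: t_def power2_eq_square field_simps)
  also have "\<dots> < 0" using L pos by (intro divide_neg_pos) (auto simp: not_square_less_zero zero_less_mult_iff)
  finally show False using assms[of t] by simp
qed

definition "D0f a b a1 b1 (\<alpha>::real) x = indicator {a1<..<b1} x + \<alpha> * indicator ({a<..<a1} \<union> {b1<..<b}) (x::real)"
definition "c0f a b a1 b1 (\<beta>::real) \<gamma> x = \<gamma> * indicator {a1<..<b1} x + \<beta> * indicator ({a<..<a1} \<union> {b1<..<b}) (x::real)"
definition "f0f a b a1 b1 h (q::real\<Rightarrow>real) x = q x * indicator {a1<..<b1} x + h x * indicator ({a<..<a1} \<union> {b1<..<b}) (x::real)"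

lemma E0_unfold:
  assumes "a1 \<noteq> b1"
  shows "E0 a b a1 b1 \<alpha> \<beta> \<gamma> \<kappa> h q g u du =
    (LINT x:{a<..<b}|lebesgue. (1/2) * (D0f a b a1 b1 \<alpha> x * (du x)^2 + c0f a b a1 b1 \<beta> \<gamma> x * (u x)^2) - f0f a b a1 b1 h q x * u x)
    + ((1/2) * \<kappa> * (u a1)^2 + g a1 * u a1) + ((1/2) * \<kappa> * (u b1)^2 + g b1 * u b1)"
  using assms by (simp add: E0_def Let_def D0f_def c0f_def f0f_def)

lemma D0f_meas: "D0f a b a1 b1 \<alpha> \<in> borel_measurable borel"
  unfolding D0f_def[abs_def] by (intro borel_measurable_add borel_measurable_times borel_measurable_indicator borel_measurable_const) auto
lemma D0f_bd: "\<alpha> > 0 \<Longrightarrow> \<bar>D0f a b a1 b1 \<alpha> x\<bar> \<le> 1 + \<alpha>"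
  unfolding D0f_def by (simp split: split_indicator)
lemmas D0f_props = D0f_meas D0f_bd
lemma c0f_meas: "c0f a b a1 b1 \<beta> \<gamma> \<in> borel_measurable borel"
  unfolding c0f_def[abs_def] by (intro borel_measurable_add borel_measurable_times borel_measurable_indicator borel_measurable_const) auto
lemma c0f_bd: "\<beta> > 0 \<Longrightarrow> \<gamma> > 0 \<Longrightarrow> \<bar>c0f a b a1 b1 \<beta> \<gamma> x\<bar> \<le> \<gamma> + \<beta>"
  unfolding c0f_def by (simp split: split_indicator)
lemmas c0f_props = c0f_meas c0f_bd

lemma f0f_L2: "L2 a b h \<Longrightarrow> L2 a b q \<Longrightarrow> L2 a b (f0f a b a1 b1 h q)"
proof -
  assume h: "L2 a b h" and q: "L2 a b q"
  have "L2 a b (\<lambda>x. indicator {a1<..<b1} x * q x + indicator ({a<..<a1} \<union> {b1<..<b}) x * h x)"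
    by (intro L2_add L2_borel_bdd_mult[where B=1] q h) (auto simp: indicator_def)
  then show ?thesis unfolding f0f_def[abs_def] by (simp add: mult.commute)
qed

lemma EL:
  assumes ord: "a < a1" "a1 < b1" "b1 < b" and pos: "\<alpha> > 0" "\<beta> > 0" "\<gamma> > 0"
    and hL2: "L2 a b h" and qL2: "L2 a b q"
    and u0H1: "H1 a b u0 du0"
    and u0min: "\<And>v dv. H1 a b v dv \<Longrightarrow>
        E0 a b a1 b1 \<alpha> \<beta> \<gamma> \<kappa> h q g u0 du0 \<le> E0 a b a1 b1 \<alpha> \<beta> \<gamma> \<kappa> h q g v dv"
    and zH1: "H1 a b z dz"
  shows "(LINT x:{a<..<b}|lebesgue. D0f a b a1 b1 \<alpha> x * du0 x * dz x + c0f a b a1 b1 \<beta> \<gamma> x * u0 x * z x - f0f a b a1 b1 h q x * z x)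
    + (\<kappa> * u0 a1 + g a1) * z a1 + (\<kappa> * u0 b1 + g b1) * z b1 = 0"
proof -
  let ?D = "D0f a b a1 b1 \<alpha>" and ?c = "c0f a b a1 b1 \<beta> \<gamma>" and ?f = "f0f a b a1 b1 h q"
  let ?L = "(LINT x:{a<..<b}|lebesgue. ?D x * du0 x * dz x + ?c x * u0 x * z x - ?f x * z x)
    + (\<kappa> * u0 a1 + g a1) * z a1 + (\<kappa> * u0 b1 + g b1) * z b1"
  let ?Q = "(LINT x:{a<..<b}|lebesgue. (1/2) * (?D x * (dz x)^2 + ?c x * (z x)^2)) + (1/2) * \<kappa> * ((z a1)^2 + (z b1)^2)"
  have ne: "a1 \<noteq> b1" using ord by simp
  have uL: "L2 a b u0" "L2 a b du0" and zL: "L2 a b z" "L2 a b dz" using u0H1 zH1 by (auto simp: H1_def)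
  have "0 \<le> t * ?L + t^2 * ?Q" for t
  proof -
    have "E0 a b a1 b1 \<alpha> \<beta> \<gamma> \<kappa> h q g u0 du0 \<le> E0 a b a1 b1 \<alpha> \<beta> \<gamma> \<kappa> h q g (\<lambda>x. u0 x + t * z x) (\<lambda>x. du0 x + t * dz x)"
      by (rule u0min[OF H1_lin[OF u0H1 zH1]])
    also have "\<dots> = E0 a b a1 b1 \<alpha> \<beta> \<gamma> \<kappa> h q g u0 du0 + (t * ?L + t^2 * ?Q)"
      unfolding E0_unfold[OF ne]
      unfolding quad_expand[OF uL zL f0f_L2[OF hL2 qL2] D0f_props(1) D0f_props(2)[OF pos(1)] c0f_props(1) c0f_props(2)[OF pos(2,3)]]
      by (simp add: algebra_simps power2_eq_square)
    finally show ?thesis by simp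
  qed
  then show ?thesis by (rule nonneg_quad_imp_zero)
qed

lemma split_W:
  assumes ord: "a < a1" "a1 < b1" "b1 < b" and \<epsilon>: "\<epsilon> > 0"
    and iF: "set_integrable lebesgue {a<..<b} (\<lambda>x. F x * Wt a1 b1 \<epsilon> x)"
  shows "(\<lambda>x. F x * dPhi \<epsilon> a1 x) integrable_on {a..(a1+b1)/2}"
    "(\<lambda>x. F x * dPhi \<epsilon> b1 x) integrable_on {(a1+b1)/2..b}"
    "(LINT x:{a<..<b}|lebesgue. F x * Wt a1 b1 \<epsilon> x)
      = integral {a..(a1+b1)/2} (\<lambda>x. F x * dPhi \<epsilon> a1 x) + integral {(a1+b1)/2..b} (\<lambda>x. F x * dPhi \<epsilon> b1 x)"
proof -
  define m where "m = (a1 + b1) / 2"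
  have am: "a < m" "m < b" using ord by (auto simp: m_def)
  let ?g = "\<lambda>x. F x * Wt a1 b1 \<epsilon> x"
  have iL: "set_integrable lebesgue {a<..<m} ?g"
    by (rule set_integrable_subset[OF iF]) (use am in auto)
  have iR: "set_integrable lebesgue {m<..<b} ?g"
    by (rule set_integrable_subset[OF iF]) (use am in auto)
  have eL: "x \<in> {a<..<m} \<Longrightarrow> ?g x = F x * dPhi \<epsilon> a1 x" for x
    using Wt_left[OF ord(2), of x \<epsilon>] by (simp add: m_def)
  have eR: "x \<in> {m<..<b} \<Longrightarrow> ?g x = F x * dPhi \<epsilon> b1 x" for x
    using Wt_right[OF ord(2), of x \<epsilon>] by (simp add: m_def)
  have hL: "?g integrable_on {a<..<m}" using set_lebesgue_integral_eq_integral(1)[OF iL] .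
  have hR: "?g integrable_on {m<..<b}" using set_lebesgue_integral_eq_integral(1)[OF iR] .
  have hL': "(\<lambda>x. F x * dPhi \<epsilon> a1 x) integrable_on {a<..<m}"
    using hL integrable_cong[of "{a<..<m}" ?g "\<lambda>x. F x * dPhi \<epsilon> a1 x"] eL by blast
  have hR': "(\<lambda>x. F x * dPhi \<epsilon> b1 x) integrable_on {m<..<b}"
    using hR integrable_cong[of "{m<..<b}" ?g "\<lambda>x. F x * dPhi \<epsilon> b1 x"] eR by blast
  show "(\<lambda>x. F x * dPhi \<epsilon> a1 x) integrable_on {a..(a1+b1)/2}"
    using hL' by (simp add: integrable_on_open_interval_real m_def)
  show "(\<lambda>x. F x * dPhi \<epsilon> b1 x) integrable_on {(a1+b1)/2..b}"
    using hR' by (simp add: integrable_on_open_interval_real m_def)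
  have "(LINT x:{a<..<b}|lebesgue. ?g x) = (LINT x:({a<..<m} \<union> {m<..<b})|lebesgue. ?g x)"
    by (rule set_integral_discrete_difference[where X="{m}"]) (use am in auto)
  also have "\<dots> = (LINT x:{a<..<m}|lebesgue. ?g x) + (LINT x:{m<..<b}|lebesgue. ?g x)"
    by (rule set_integral_Un[OF _ iL iR]) auto
  also have "(LINT x:{a<..<m}|lebesgue. ?g x) = integral {a<..<m} ?g"
    by (rule set_lebesgue_integral_eq_integral(2)[OF iL])
  also have "\<dots> = integral {a<..<m} (\<lambda>x. F x * dPhi \<epsilon> a1 x)"
    by (rule integral_cong) (rule eL)
  also have "\<dots> = integral {a..m} (\<lambda>x. F x * dPhi \<epsilon> a1 x)"
    by (simp add: integral_open_interval_real)
  also have "(LINT x:{m<..<b}|lebesgue. ?g x) = integral {m<..<b} ?g"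
    by (rule set_lebesgue_integral_eq_integral(2)[OF iR])
  also have "\<dots> = integral {m<..<b} (\<lambda>x. F x * dPhi \<epsilon> b1 x)"
    by (rule integral_cong) (rule eR)
  also have "\<dots> = integral {m..b} (\<lambda>x. F x * dPhi \<epsilon> b1 x)"
    by (simp add: integral_open_interval_real)
  finally show "(LINT x:{a<..<b}|lebesgue. F x * Wt a1 b1 \<epsilon> x)
      = integral {a..(a1+b1)/2} (\<lambda>x. F x * dPhi \<epsilon> a1 x) + integral {(a1+b1)/2..b} (\<lambda>x. F x * dPhi \<epsilon> b1 x)"
    by (simp add: m_def)
qed

lemma boundary_est:
  assumes ord: "a < a1" "a1 < b1" "b1 < b" and \<epsilon>: "\<epsilon> > 0" and \<eta>: "\<eta> > 0"
    and c1: "a + \<eta> \<le> a1" "a1 + \<eta> \<le> (a1+b1)/2" and c2: "(a1+b1)/2 + \<eta> \<le> b1" "b1 + \<eta> \<le> b"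
    and iF: "set_integrable lebesgue {a<..<b} (\<lambda>x. F x * Wt a1 b1 \<epsilon> x)"
    and F1: "\<And>x. x \<in> {a<..<b} \<Longrightarrow> \<bar>F x - F a1\<bar> \<le> C1 * sqrt \<bar>x - a1\<bar>" and C1: "C1 \<ge> 0"
    and F2: "\<And>x. x \<in> {a<..<b} \<Longrightarrow> \<bar>F x - F b1\<bar> \<le> C2 * sqrt \<bar>x - b1\<bar>" and C2: "C2 \<ge> 0"
  shows "\<bar>(LINT x:{a<..<b}|lebesgue. F x * Wt a1 b1 \<epsilon> x) - F a1 - F b1\<bar>
    \<le> C1 * (sqrt \<eta> + sqrt ((a1+b1)/2 - a) * (1 - tanh (\<eta> / \<epsilon>))) + \<bar>F a1\<bar> * \<bar>Phi \<epsilon> a1 ((a1+b1)/2) - Phi \<epsilon> a1 a - 1\<bar>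
     + (C2 * (sqrt \<eta> + sqrt (b - (a1+b1)/2) * (1 - tanh (\<eta> / \<epsilon>))) + \<bar>F b1\<bar> * \<bar>Phi \<epsilon> b1 b - Phi \<epsilon> b1 ((a1+b1)/2) - 1\<bar>)"
proof -
  note S = split_W[OF ord \<epsilon> iF]
  have d1: "\<bar>integral {a..(a1+b1)/2} (\<lambda>x. F x * dPhi \<epsilon> a1 x) - F a1\<bar>
    \<le> C1 * (sqrt \<eta> + sqrt ((a1+b1)/2 - a) * (1 - tanh (\<eta> / \<epsilon>))) + \<bar>F a1\<bar> * \<bar>Phi \<epsilon> a1 ((a1+b1)/2) - Phi \<epsilon> a1 a - 1\<bar>"
    by (rule delta_est[OF \<epsilon> \<eta> c1 S(1) _ C1]) (use F1 ord in auto)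
  have d2: "\<bar>integral {(a1+b1)/2..b} (\<lambda>x. F x * dPhi \<epsilon> b1 x) - F b1\<bar>
    \<le> C2 * (sqrt \<eta> + sqrt (b - (a1+b1)/2) * (1 - tanh (\<eta> / \<epsilon>))) + \<bar>F b1\<bar> * \<bar>Phi \<epsilon> b1 b - Phi \<epsilon> b1 ((a1+b1)/2) - 1\<bar>"
    by (rule delta_est[OF \<epsilon> \<eta> c2 S(2) _ C2]) (use F2 ord in auto)
  show ?thesis unfolding S(3) using d1 d2 by linarith
qed

lemma amgm: "(mm::real) > 0 \<Longrightarrow> x * y \<le> x^2 / mm + mm * y^2 / 4"
proof -
  assume m: "mm > 0"
  have "0 \<le> (2 * x - mm * y)^2 / (4 * mm)" using m by simp
  also have "(2 * x - mm * y)^2 / (4 * mm) = x^2 / mm + mm * y^2 / 4 - x * y"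
    using m by (simp add: power2_eq_square field_simps)
  finally show ?thesis by simp
qed

definition "Kc (a::real) b = max (2 / (b - a)) (2 * (b - a))"

lemma Kc_pos: "a < b \<Longrightarrow> Kc a b > 0" by (simp add: Kc_def less_max_iff_disj)

definition "NH (a::real) b v dv = (LINT t:{a<..<b}|lebesgue. (v t)^2) + (LINT t:{a<..<b}|lebesgue. (dv t)^2)"

lemma NH_nonneg: "H1 a b v dv \<Longrightarrow> NH a b v dv \<ge> 0"
  unfolding NH_def using L2_int_nonneg by (auto simp: H1_def intro!: add_nonneg_nonneg)

lemma w_bound:
  assumes H: "H1 a b w dw" and x: "x \<in> {a<..<b}"
  shows "\<bar>w x\<bar> \<le> sqrt (Kc a b) * sqrt (NH a b w dw)"
proof -
  have ab: "a < b" using x by auto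
  have n1: "0 \<le> (LINT t:{a<..<b}|lebesgue. (w t)^2)" "0 \<le> (LINT t:{a<..<b}|lebesgue. (dw t)^2)"
    using H L2_int_nonneg by (auto simp: H1_def)
  have "(w x)^2 \<le> 2 / (b - a) * (LINT t:{a<..<b}|lebesgue. (w t)^2) + 2 * (b - a) * (LINT t:{a<..<b}|lebesgue. (dw t)^2)"
    by (rule sup_bound[OF H x])
  also have "\<dots> \<le> Kc a b * (LINT t:{a<..<b}|lebesgue. (w t)^2) + Kc a b * (LINT t:{a<..<b}|lebesgue. (dw t)^2)"
    using n1 by (intro add_mono mult_right_mono) (auto simp: Kc_def)
  also have "\<dots> = Kc a b * NH a b w dw" by (simp add: NH_def algebra_simps)
  finally have "sqrt ((w x)^2) \<le> sqrt (Kc a b * NH a b w dw)" by (rule real_sqrt_le_mono)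
  then show ?thesis by (simp add: real_sqrt_mult)
qed

lemma diff_bound:
  assumes H: "H1 a b w dw" and x: "x \<in> {a<..<b}" and c: "c \<in> {a<..<b}"
  shows "\<bar>w x - w c\<bar> \<le> sqrt \<bar>x - c\<bar> * sqrt (LINT t:{a<..<b}|lebesgue. (dw t)^2)"
proof -
  have "(w x - w c)^2 \<le> \<bar>x - c\<bar> * (LINT t:{a<..<b}|lebesgue. (dw t)^2)"
    by (rule seg_bound[OF H c x])
  then have "sqrt ((w x - w c)^2) \<le> sqrt (\<bar>x - c\<bar> * (LINT t:{a<..<b}|lebesgue. (dw t)^2))" by (rule real_sqrt_le_mono)
  then show ?thesis by (simp add: real_sqrt_mult)
qed

lemma prod_bound:
  assumes P: "H1 a b \<psi> d\<psi>" and H: "H1 a b w dw" and x: "x \<in> {a<..<b}" and c: "c \<in> {a<..<b}"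
  shows "\<bar>\<psi> x * w x - \<psi> c * w c\<bar>
    \<le> (sqrt (NH a b w dw) * (sqrt (LINT t:{a<..<b}|lebesgue. (d\<psi> t)^2) * sqrt (Kc a b) + \<bar>\<psi> c\<bar>)) * sqrt \<bar>x - c\<bar>"
proof -
  let ?N = "NH a b w dw" and ?Np = "LINT t:{a<..<b}|lebesgue. (d\<psi> t)^2" and ?Nd = "LINT t:{a<..<b}|lebesgue. (dw t)^2"
  have n1: "0 \<le> (LINT t:{a<..<b}|lebesgue. (w t)^2)" "0 \<le> ?Nd"
    using H L2_int_nonneg by (auto simp: H1_def)
  have Nd: "sqrt ?Nd \<le> sqrt ?N" using n1 by (intro real_sqrt_le_mono) (simp add: NH_def)
  have "\<psi> x * w x - \<psi> c * w c = (\<psi> x - \<psi> c) * w x + \<psi> c * (w x - w c)" by (simp add: algebra_simps)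
  then have "\<bar>\<psi> x * w x - \<psi> c * w c\<bar> \<le> \<bar>\<psi> x - \<psi> c\<bar> * \<bar>w x\<bar> + \<bar>\<psi> c\<bar> * \<bar>w x - w c\<bar>"
  proof -
    have "\<bar>(\<psi> x - \<psi> c) * w x + \<psi> c * (w x - w c)\<bar> \<le> \<bar>(\<psi> x - \<psi> c) * w x\<bar> + \<bar>\<psi> c * (w x - w c)\<bar>"
      by (rule abs_triangle_ineq)
    then show ?thesis using \<open>\<psi> x * w x - \<psi> c * w c = _\<close> by (simp add: abs_mult)
  qed
  also have "\<dots> \<le> (sqrt \<bar>x - c\<bar> * sqrt ?Np) * (sqrt (Kc a b) * sqrt ?N) + \<bar>\<psi> c\<bar> * (sqrt \<bar>x - c\<bar> * sqrt ?N)"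
  proof -
    have e1: "\<bar>\<psi> x - \<psi> c\<bar> \<le> sqrt \<bar>x - c\<bar> * sqrt ?Np" by (rule diff_bound[OF P x c])
    have e2: "\<bar>w x\<bar> \<le> sqrt (Kc a b) * sqrt ?N" by (rule w_bound[OF H x])
    have e3: "\<bar>w x - w c\<bar> \<le> sqrt \<bar>x - c\<bar> * sqrt ?N"
    proof -
      have "sqrt \<bar>x - c\<bar> * sqrt ?Nd \<le> sqrt \<bar>x - c\<bar> * sqrt ?N" by (rule mult_left_mono[OF Nd]) simp
      with diff_bound[OF H x c] show ?thesis by (rule order_trans)
    qed
    have "\<bar>\<psi> x - \<psi> c\<bar> * \<bar>w x\<bar> \<le> (sqrt \<bar>x - c\<bar> * sqrt ?Np) * (sqrt (Kc a b) * sqrt ?N)"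
    proof (rule mult_mono[OF e1 e2])
      have "0 \<le> ?Np" using P L2_int_nonneg by (auto simp: H1_def)
      then show "0 \<le> sqrt \<bar>x - c\<bar> * sqrt ?Np" by simp
    qed simp
    moreover have "\<bar>\<psi> c\<bar> * \<bar>w x - w c\<bar> \<le> \<bar>\<psi> c\<bar> * (sqrt \<bar>x - c\<bar> * sqrt ?N)"
      by (rule mult_left_mono[OF e3]) auto
    ultimately show ?thesis by (rule add_mono)
  qed
  also have "\<dots> = (sqrt ?N * (sqrt ?Np * sqrt (Kc a b) + \<bar>\<psi> c\<bar>)) * sqrt \<bar>x - c\<bar>"
    by (simp add: algebra_simps)
  finally show ?thesis .
qed

lemma ind2: "x \<in> {a<..<b} \<Longrightarrow> x \<noteq> a1 \<Longrightarrow> x \<noteq> b1 \<Longrightarrow> a < a1 \<Longrightarrow> a1 < b1 \<Longrightarrow> b1 < b \<Longrightarrow>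
  indicator ({a<..<a1} \<union> {b1<..<b}) x = (1 - indicator {a1<..<b1} (x::real) :: real)"
  by (auto simp: indicator_def)

lemma key_ineq:
  fixes a b a1 b1 \<alpha> \<beta> \<gamma> \<kappa> \<epsilon> \<eta> :: real and h q g dg u0 du0 ue due :: "real \<Rightarrow> real"
  assumes ord: "a < a1" "a1 < b1" "b1 < b"
    and pos: "\<alpha> > 0" "\<beta> > 0" "\<gamma> > 0" "\<kappa> \<ge> 0"
    and hL2: "L2 a b h" and qL2: "L2 a b q" and gH: "H1 a b g dg"
    and u0H1: "H1 a b u0 du0"
    and u0min: "\<And>v dv. H1 a b v dv \<Longrightarrow>
        E0 a b a1 b1 \<alpha> \<beta> \<gamma> \<kappa> h q g u0 du0 \<le> E0 a b a1 b1 \<alpha> \<beta> \<gamma> \<kappa> h q g v dv"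
    and uH: "H1 a b ue due"
    and uw: "\<And>v dv. H1 a b v dv \<Longrightarrow>
        (LINT x:{a<..<b}|lebesgue.
            (\<alpha> + (1 - \<alpha>) * phi_eps a1 b1 \<epsilon> x) * due x * dv x
          + (\<beta> + (\<gamma> - \<beta>) * phi_eps a1 b1 \<epsilon> x) * ue x * v x
          + (\<kappa> * ue x + g x) * \<bar>deriv (phi_eps a1 b1 \<epsilon>) x\<bar> * v x)
        = (LINT x:{a<..<b}|lebesgue. (h x + (q x - h x) * phi_eps a1 b1 \<epsilon> x) * v x)"
    and \<epsilon>: "\<epsilon> > 0" and \<eta>: "\<eta> > 0"
    and c1: "a + \<eta> \<le> a1" "a1 + \<eta> \<le> (a1+b1)/2" and c2: "(a1+b1)/2 + \<eta> \<le> b1" "b1 + \<eta> \<le> b"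
  defines "mm \<equiv> min (min \<alpha> 1) (min \<beta> \<gamma>)"
    and "\<psi> \<equiv> \<lambda>x. g x + \<kappa> * u0 x" and "d\<psi> \<equiv> \<lambda>x. dg x + \<kappa> * du0 x"
  shows "mm / 4 * NH a b (\<lambda>x. ue x - u0 x) (\<lambda>x. due x - du0 x)
    \<le> (1 / mm) * ((LINT x:{a<..<b}|lebesgue. (phi_eps a1 b1 \<epsilon> x - indicator {a1<..<b1} x)^2 * (q x - h x)^2)
         + (1 - \<alpha>)^2 * (LINT x:{a<..<b}|lebesgue. (phi_eps a1 b1 \<epsilon> x - indicator {a1<..<b1} x)^2 * (du0 x)^2)
         + (\<gamma> - \<beta>)^2 * (LINT x:{a<..<b}|lebesgue. (phi_eps a1 b1 \<epsilon> x - indicator {a1<..<b1} x)^2 * (u0 x)^2))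
      + ((sqrt (LINT t:{a<..<b}|lebesgue. (d\<psi> t)^2) * sqrt (Kc a b) + \<bar>\<psi> a1\<bar>) * (sqrt \<eta> + sqrt ((a1+b1)/2 - a) * (1 - tanh (\<eta> / \<epsilon>)))
         + \<bar>\<psi> a1\<bar> * sqrt (Kc a b) * \<bar>Phi \<epsilon> a1 ((a1+b1)/2) - Phi \<epsilon> a1 a - 1\<bar>
         + (sqrt (LINT t:{a<..<b}|lebesgue. (d\<psi> t)^2) * sqrt (Kc a b) + \<bar>\<psi> b1\<bar>) * (sqrt \<eta> + sqrt (b - (a1+b1)/2) * (1 - tanh (\<eta> / \<epsilon>)))
         + \<bar>\<psi> b1\<bar> * sqrt (Kc a b) * \<bar>Phi \<epsilon> b1 b - Phi \<epsilon> b1 ((a1+b1)/2) - 1\<bar>)^2 / mm"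
proof -
  let ?I = "{a<..<b}"
  define P where "P = phi_eps a1 b1 \<epsilon>"
  define W where "W = Wt a1 b1 \<epsilon>"
  define chi where "chi = (\<lambda>x. indicator {a1<..<b1} x :: real)"
  define \<rho> where "\<rho> = (\<lambda>x. P x - chi x)"
  define w where "w = (\<lambda>x. ue x - u0 x)"
  define dw where "dw = (\<lambda>x. due x - du0 x)"
  define m0 where "m0 = (a1 + b1) / 2"
  have mm: "mm > 0" using pos by (simp add: mm_def)
  have ab: "a1 < b1" using ord by simp
  have wH: "H1 a b w dw"
    using H1_lin[OF uH u0H1, of "-1"] by (simp add: w_def dw_def)
  have \<psi>H: "H1 a b \<psi> d\<psi>"
    using H1_lin[OF gH u0H1, of \<kappa>] by (simp add: \<psi>_def d\<psi>_def)
  have uL: "L2 a b ue" "L2 a b due" using uH by (auto simp: H1_def)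
  have u0L: "L2 a b u0" "L2 a b du0" using u0H1 by (auto simp: H1_def)
  have wL: "L2 a b w" "L2 a b dw" using wH by (auto simp: H1_def)
  have \<psi>L: "L2 a b \<psi>" using \<psi>H by (auto simp: H1_def)
  have gL: "L2 a b g" using gH by (auto simp: H1_def)
  have qhL: "L2 a b (\<lambda>x. q x - h x)" using qL2 hL2 by (rule L2_diff)
  have Pm: "P \<in> borel_measurable borel" unfolding P_def
    using phi_cont[OF ab \<epsilon>] by (rule borel_measurable_continuous_onI)
  have Pb: "\<bar>P x\<bar> \<le> 1" for x using phi_bounds[of a1 b1 \<epsilon> x] by (simp add: P_def)
  have P01: "0 \<le> P x" "P x \<le> 1" for x using phi_bounds[of a1 b1 \<epsilon> x] by (auto simp: P_def)
  have Wm: "W \<in> borel_measurable borel" unfolding W_def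
    using Wt_cont[OF ab \<epsilon>] by (rule borel_measurable_continuous_onI)
  have Wb: "\<bar>W x\<bar> \<le> 1 / (2 * \<epsilon>)" for x using Wt_bounds[OF \<epsilon>, of a1 b1 x] by (simp add: W_def)
  have W0: "0 \<le> W x" for x using Wt_bounds[OF \<epsilon>, of a1 b1 x] by (simp add: W_def)
  have chim: "chi \<in> borel_measurable borel" unfolding chi_def by simp
  have \<rho>m: "\<rho> \<in> borel_measurable borel" unfolding \<rho>_def using Pm chim by simp
  have \<rho>b: "\<bar>\<rho> x\<bar> \<le> 1" for x using P01[of x] by (auto simp: \<rho>_def chi_def indicator_def)
  have \<rho>2m: "(\<lambda>x. (\<rho> x)^2) \<in> borel_measurable borel" using \<rho>m by simp
  have \<rho>2b: "\<bar>(\<rho> x)^2\<bar> \<le> 1" for x using \<rho>b[of x] by (simp add: abs_square_le_1)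
  define cD where "cD = (\<lambda>x. \<alpha> + (1 - \<alpha>) * P x)"
  define cC where "cC = (\<lambda>x. \<beta> + (\<gamma> - \<beta>) * P x)"
  have cDm: "cD \<in> borel_measurable borel" unfolding cD_def using Pm by simp
  have cCm: "cC \<in> borel_measurable borel" unfolding cC_def using Pm by simp
  have cDb: "\<bar>cD x\<bar> \<le> \<bar>\<alpha>\<bar> + \<bar>1 - \<alpha>\<bar>" for x
  proof -
    have "\<bar>cD x\<bar> \<le> \<bar>\<alpha>\<bar> + \<bar>(1 - \<alpha>) * P x\<bar>" unfolding cD_def by (rule abs_triangle_ineq)
    also have "\<bar>(1 - \<alpha>) * P x\<bar> \<le> \<bar>1 - \<alpha>\<bar>" using Pb[of x] by (simp add: abs_mult mult_left_le)
    finally show ?thesis by simp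
  qed
  have cCb: "\<bar>cC x\<bar> \<le> \<bar>\<beta>\<bar> + \<bar>\<gamma> - \<beta>\<bar>" for x
  proof -
    have "\<bar>cC x\<bar> \<le> \<bar>\<beta>\<bar> + \<bar>(\<gamma> - \<beta>) * P x\<bar>" unfolding cC_def by (rule abs_triangle_ineq)
    also have "\<bar>(\<gamma> - \<beta>) * P x\<bar> \<le> \<bar>\<gamma> - \<beta>\<bar>" using Pb[of x] by (simp add: abs_mult mult_left_le)
    finally show ?thesis by simp
  qed
  have cDlow: "cD x \<ge> mm" for x
  proof -
    have "cD x = \<alpha> * (1 - P x) + 1 * P x" by (simp add: cD_def algebra_simps)
    also have "\<dots> \<ge> mm * (1 - P x) + mm * P x"
      using P01[of x] by (intro add_mono mult_right_mono) (auto simp: mm_def)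
    finally show ?thesis by (simp add: algebra_simps)
  qed
  have cClow: "cC x \<ge> mm" for x
  proof -
    have "cC x = \<beta> * (1 - P x) + \<gamma> * P x" by (simp add: cC_def algebra_simps)
    also have "\<dots> \<ge> mm * (1 - P x) + mm * P x"
      using P01[of x] by (intro add_mono mult_right_mono) (auto simp: mm_def)
    finally show ?thesis by (simp add: algebra_simps)
  qed

  define XU where "XU = (\<lambda>x. cD x * due x * dw x + cC x * ue x * w x + W x * (\<kappa> * ue x + g x) * w x)"
  define XF where "XF = (\<lambda>x. (h x + P x * (q x - h x)) * w x)"
  define XE where "XE = (\<lambda>x. D0f a b a1 b1 \<alpha> x * du0 x * dw x + c0f a b a1 b1 \<beta> \<gamma> x * u0 x * w x - f0f a b a1 b1 h q x * w x)"
  define G where "G = (\<lambda>x. cD x * (dw x)^2 + cC x * (w x)^2 + \<kappa> * (W x * (w x)^2))"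
  define R1 where "R1 = (\<lambda>x. \<rho> x * (q x - h x) * w x - (1 - \<alpha>) * (\<rho> x * du0 x * dw x) - (\<gamma> - \<beta>) * (\<rho> x * u0 x * w x))"
  define Y where "Y = (\<lambda>x. W x * \<psi> x * w x)"
  have iXU: "set_integrable lebesgue ?I XU" unfolding XU_def
    by (intro set_integral_add(1) int_tri[OF uL(2) wL(2) cDm cDb] int_tri[OF uL(1) wL(1) cCm cCb]
        int_tri[OF L2_add[OF L2_cmult[OF uL(1)] gL] wL(1) Wm Wb])
  have iXF: "set_integrable lebesgue ?I XF" unfolding XF_def
    by (rule L2_prod[OF L2_add[OF hL2 L2_borel_bdd_mult[OF qhL Pm Pb]] wL(1)])
  have iXE: "set_integrable lebesgue ?I XE" unfolding XE_def
    by (intro set_integral_diff(1) set_integral_add(1) int_tri[OF u0L(2) wL(2) D0f_meas D0f_bd[OF pos(1)]]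
        int_tri[OF u0L(1) wL(1) c0f_meas c0f_bd[OF pos(2,3)]] L2_prod[OF f0f_L2[OF hL2 qL2] wL(1)])
  have iG: "set_integrable lebesgue ?I G" unfolding G_def
    by (intro set_integral_add(1) set_integrable_mult_right int_trisq[OF wL(2) cDm cDb] int_trisq[OF wL(1) cCm cCb]
        int_trisq[OF wL(1) Wm Wb])
  have iR1: "set_integrable lebesgue ?I R1" unfolding R1_def
    by (intro set_integral_diff(1) set_integrable_mult_right int_tri[OF qhL wL(1) \<rho>m \<rho>b]
        int_tri[OF u0L(2) wL(2) \<rho>m \<rho>b] int_tri[OF u0L(1) wL(1) \<rho>m \<rho>b])
  have iY: "set_integrable lebesgue ?I Y" unfolding Y_def
    by (rule int_tri[OF \<psi>L wL(1) Wm Wb])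
  have U: "(LINT x:?I|lebesgue. XU x) = (LINT x:?I|lebesgue. XF x)"
  proof -
    have "(LINT x:?I|lebesgue. XU x) = (LINT x:?I|lebesgue.
            (\<alpha> + (1 - \<alpha>) * phi_eps a1 b1 \<epsilon> x) * due x * dw x
          + (\<beta> + (\<gamma> - \<beta>) * phi_eps a1 b1 \<epsilon> x) * ue x * w x
          + (\<kappa> * ue x + g x) * \<bar>deriv (phi_eps a1 b1 \<epsilon>) x\<bar> * w x)"
      unfolding set_lebesgue_integral_def
    proof (rule integral_discrete_difference[where X="{m0}"])
      fix x assume "x \<notin> {m0}"
      then have "\<bar>deriv (phi_eps a1 b1 \<epsilon>) x\<bar> = W x"
        using deriv_phi_abs[OF ab \<epsilon>, of x] by (simp add: W_def m0_def)
      then show "indicat_real ?I x *\<^sub>R XU x = indicat_real ?I x *\<^sub>R ((\<alpha> + (1 - \<alpha>) * phi_eps a1 b1 \<epsilon> x) * due x * dw x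
          + (\<beta> + (\<gamma> - \<beta>) * phi_eps a1 b1 \<epsilon> x) * ue x * w x
          + (\<kappa> * ue x + g x) * \<bar>deriv (phi_eps a1 b1 \<epsilon>) x\<bar> * w x)"
        by (simp add: XU_def cD_def cC_def P_def mult_ac)
    qed auto
    also have "\<dots> = (LINT x:?I|lebesgue. (h x + (q x - h x) * phi_eps a1 b1 \<epsilon> x) * w x)"
      using uw[OF wH] .
    also have "\<dots> = (LINT x:?I|lebesgue. XF x)"
      by (rule set_lebesgue_integral_cong) (auto simp: XF_def P_def mult_ac)
    finally show ?thesis .
  qed
  have ELw: "(LINT x:?I|lebesgue. XE x) + (\<kappa> * u0 a1 + g a1) * w a1 + (\<kappa> * u0 b1 + g b1) * w b1 = 0"
    unfolding XE_def by (rule EL[OF ord pos(1-3) hL2 qL2 u0H1 u0min wH])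
  have ptw: "XU x - XF x - XE x = G x - R1 x + Y x" if x: "x \<in> ?I" "x \<noteq> a1" "x \<noteq> b1" for x
  proof -
    have i2: "indicator ({a<..<a1} \<union> {b1<..<b}) x = (1 - chi x :: real)"
      using ind2[OF x ord] by (simp add: chi_def)
    have D: "D0f a b a1 b1 \<alpha> x = chi x + \<alpha> * (1 - chi x)"
      using i2 by (simp add: D0f_def chi_def)
    have C: "c0f a b a1 b1 \<beta> \<gamma> x = \<gamma> * chi x + \<beta> * (1 - chi x)"
      using i2 by (simp add: c0f_def chi_def)
    have F: "f0f a b a1 b1 h q x = q x * chi x + h x * (1 - chi x)"
      using i2 by (simp add: f0f_def chi_def)
    show ?thesis
      unfolding XU_def XF_def XE_def G_def R1_def Y_def D C F \<rho>_def cD_def cC_def w_def dw_def \<psi>_def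
      by (simp add: algebra_simps power2_eq_square)
  qed
  have eq1: "(LINT x:?I|lebesgue. G x - R1 x + Y x) = (LINT x:?I|lebesgue. XU x - XF x - XE x)"
    unfolding set_lebesgue_integral_def
  proof (rule integral_discrete_difference[where X="{a1, b1}"])
    fix x assume "x \<notin> {a1, b1}"
    then show "indicat_real ?I x *\<^sub>R (G x - R1 x + Y x) = indicat_real ?I x *\<^sub>R (XU x - XF x - XE x)"
      using ptw[of x] by (cases "x \<in> ?I") auto
  qed auto
  have eqGR: "(LINT x:?I|lebesgue. G x - R1 x) = \<psi> a1 * w a1 + \<psi> b1 * w b1 - (LINT x:?I|lebesgue. Y x)"
  proof -
    have "(LINT x:?I|lebesgue. G x - R1 x + Y x) = (LINT x:?I|lebesgue. G x - R1 x) + (LINT x:?I|lebesgue. Y x)"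
      by (rule set_integral_add(2)[OF set_integral_diff(1)[OF iG iR1] iY])
    moreover have "(LINT x:?I|lebesgue. XU x - XF x - XE x) = (LINT x:?I|lebesgue. XU x) - (LINT x:?I|lebesgue. XF x) - (LINT x:?I|lebesgue. XE x)"
      by (simp only: set_integral_diff(2)[OF set_integral_diff(1)[OF iXU iXF] iXE] set_integral_diff(2)[OF iXU iXF])
    ultimately show ?thesis using eq1 U ELw by (simp add: \<psi>_def algebra_simps)
  qed

  define E1f where "E1f = (\<lambda>x. (1 / mm) * ((\<rho> x)^2 * (q x - h x)^2 + (1 - \<alpha>)^2 * ((\<rho> x)^2 * (du0 x)^2) + (\<gamma> - \<beta>)^2 * ((\<rho> x)^2 * (u0 x)^2)))"
  define LB where "LB = (\<lambda>x. mm / 2 * (w x)^2 + 3 * mm / 4 * (dw x)^2 - E1f x)"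
  have iE1: "set_integrable lebesgue ?I E1f" unfolding E1f_def
    by (intro set_integrable_mult_right set_integral_add(1) int_trisq[OF qhL \<rho>2m \<rho>2b] int_trisq[OF u0L(2) \<rho>2m \<rho>2b]
        int_trisq[OF u0L(1) \<rho>2m \<rho>2b])
  have iw2: "set_integrable lebesgue ?I (\<lambda>x. (w x)^2)" "set_integrable lebesgue ?I (\<lambda>x. (dw x)^2)"
    using wL by (auto intro: L2_sq)
  have iLB: "set_integrable lebesgue ?I LB" unfolding LB_def
    by (intro set_integral_diff(1) set_integral_add(1) set_integrable_mult_right iw2 iE1)
  have pLB: "LB x \<le> G x - R1 x" for x
  proof -
    have g1: "cD x * (dw x)^2 \<ge> mm * (dw x)^2" using cDlow[of x] by (intro mult_right_mono) auto
    have g2: "cC x * (w x)^2 \<ge> mm * (w x)^2" using cClow[of x] by (intro mult_right_mono) auto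
    have g3: "\<kappa> * (W x * (w x)^2) \<ge> 0" using pos(4) W0[of x] by simp
    have r1: "(\<rho> x * (q x - h x)) * w x \<le> (\<rho> x * (q x - h x))^2 / mm + mm * (w x)^2 / 4" by (rule amgm[OF mm])
    have r2: "(- (1 - \<alpha>) * \<rho> x * du0 x) * dw x \<le> (- (1 - \<alpha>) * \<rho> x * du0 x)^2 / mm + mm * (dw x)^2 / 4" by (rule amgm[OF mm])
    have r3: "(- (\<gamma> - \<beta>) * \<rho> x * u0 x) * w x \<le> (- (\<gamma> - \<beta>) * \<rho> x * u0 x)^2 / mm + mm * (w x)^2 / 4" by (rule amgm[OF mm])
    have "R1 x \<le> E1f x + mm / 4 * (2 * (w x)^2 + (dw x)^2)"
    proof -
      have "R1 x = (\<rho> x * (q x - h x)) * w x + (- (1 - \<alpha>) * \<rho> x * du0 x) * dw x + (- (\<gamma> - \<beta>) * \<rho> x * u0 x) * w x"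
        by (simp add: R1_def algebra_simps)
      also have "\<dots> \<le> ((\<rho> x * (q x - h x))^2 / mm + mm * (w x)^2 / 4) + ((- (1 - \<alpha>) * \<rho> x * du0 x)^2 / mm + mm * (dw x)^2 / 4)
          + ((- (\<gamma> - \<beta>) * \<rho> x * u0 x)^2 / mm + mm * (w x)^2 / 4)"
        using r1 r2 r3 by linarith
      also have "\<dots> = E1f x + mm / 4 * (2 * (w x)^2 + (dw x)^2)"
      proof -
        have s1: "(\<rho> x * (q x - h x))^2 = (\<rho> x)^2 * (q x - h x)^2" by (rule power_mult_distrib)
        have s2: "(- (1 - \<alpha>) * \<rho> x * du0 x)^2 = (1 - \<alpha>)^2 * ((\<rho> x)^2 * (du0 x)^2)" by (simp only: power_mult_distrib power2_minus mult.assoc)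
        have s3: "(- (\<gamma> - \<beta>) * \<rho> x * u0 x)^2 = (\<gamma> - \<beta>)^2 * ((\<rho> x)^2 * (u0 x)^2)" by (simp only: power_mult_distrib power2_minus mult.assoc)
        show ?thesis unfolding s1 s2 s3 E1f_def by (simp add: add_divide_distrib algebra_simps)
      qed
      finally show ?thesis .
    qed
    then show ?thesis using g1 g2 g3 by (simp add: LB_def G_def field_simps)
  qed
  have "(LINT x:?I|lebesgue. LB x) \<le> (LINT x:?I|lebesgue. G x - R1 x)"
    by (rule set_integral_mono[OF iLB set_integral_diff(1)[OF iG iR1] pLB])
  moreover have "(LINT x:?I|lebesgue. LB x) = mm / 2 * (LINT x:?I|lebesgue. (w x)^2) + 3 * mm / 4 * (LINT x:?I|lebesgue. (dw x)^2) - (LINT x:?I|lebesgue. E1f x)"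
    unfolding LB_def
    by (simp only: set_integral_diff(2)[OF set_integral_add(1)[OF set_integrable_mult_right[OF iw2(1)] set_integrable_mult_right[OF iw2(2)]] iE1]
        set_integral_add(2)[OF set_integrable_mult_right[OF iw2(1)] set_integrable_mult_right[OF iw2(2)]] set_integral_mult_right)
  ultimately have low: "mm / 2 * (LINT x:?I|lebesgue. (w x)^2) + 3 * mm / 4 * (LINT x:?I|lebesgue. (dw x)^2) - (LINT x:?I|lebesgue. E1f x)
      \<le> \<psi> a1 * w a1 + \<psi> b1 * w b1 - (LINT x:?I|lebesgue. Y x)"
    using eqGR by simp
  have E1val0: "(LINT x:?I|lebesgue. E1f x) = (1 / mm) * ((LINT x:?I|lebesgue. (\<rho> x)^2 * (q x - h x)^2)
         + (1 - \<alpha>)^2 * (LINT x:?I|lebesgue. (\<rho> x)^2 * (du0 x)^2)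
         + (\<gamma> - \<beta>)^2 * (LINT x:?I|lebesgue. (\<rho> x)^2 * (u0 x)^2))"
    unfolding E1f_def set_integral_mult_right
    by (simp only: set_integral_add(2)[OF set_integral_add(1)[OF int_trisq[OF qhL \<rho>2m \<rho>2b] set_integrable_mult_right[OF int_trisq[OF u0L(2) \<rho>2m \<rho>2b]]]
          set_integrable_mult_right[OF int_trisq[OF u0L(1) \<rho>2m \<rho>2b]]]
        set_integral_add(2)[OF int_trisq[OF qhL \<rho>2m \<rho>2b] set_integrable_mult_right[OF int_trisq[OF u0L(2) \<rho>2m \<rho>2b]]]
        set_integral_mult_right)
  have E1val: "(LINT x:?I|lebesgue. E1f x) = (1 / mm) * ((LINT x:{a<..<b}|lebesgue. (phi_eps a1 b1 \<epsilon> x - indicator {a1<..<b1} x)^2 * (q x - h x)^2)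
         + (1 - \<alpha>)^2 * (LINT x:{a<..<b}|lebesgue. (phi_eps a1 b1 \<epsilon> x - indicator {a1<..<b1} x)^2 * (du0 x)^2)
         + (\<gamma> - \<beta>)^2 * (LINT x:{a<..<b}|lebesgue. (phi_eps a1 b1 \<epsilon> x - indicator {a1<..<b1} x)^2 * (u0 x)^2))"
    using E1val0 by (simp only: \<rho>_def P_def chi_def)
  define F where "F = (\<lambda>x. \<psi> x * w x)"
  define NN where "NN = NH a b w dw"
  define Np where "Np = (LINT t:{a<..<b}|lebesgue. (d\<psi> t)^2)"
  define K where "K = Kc a b"
  define T1 where "T1 = sqrt \<eta> + sqrt ((a1+b1)/2 - a) * (1 - tanh (\<eta> / \<epsilon>))"
  define T2 where "T2 = sqrt \<eta> + sqrt (b - (a1+b1)/2) * (1 - tanh (\<eta> / \<epsilon>))"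
  define Er1 where "Er1 = \<bar>Phi \<epsilon> a1 ((a1+b1)/2) - Phi \<epsilon> a1 a - 1\<bar>"
  define Er2 where "Er2 = \<bar>Phi \<epsilon> b1 b - Phi \<epsilon> b1 ((a1+b1)/2) - 1\<bar>"
  define Af where "Af = (sqrt Np * sqrt K + \<bar>\<psi> a1\<bar>) * T1 + \<bar>\<psi> a1\<bar> * sqrt K * Er1
      + (sqrt Np * sqrt K + \<bar>\<psi> b1\<bar>) * T2 + \<bar>\<psi> b1\<bar> * sqrt K * Er2"
  have NN0: "NN \<ge> 0" unfolding NN_def by (rule NH_nonneg[OF wH])
  have Np0: "Np \<ge> 0" unfolding Np_def using \<psi>H L2_int_nonneg by (auto simp: H1_def)
  have T10: "T1 \<ge> 0" "T2 \<ge> 0" using tanh_real_lt_1[of "\<eta> / \<epsilon>"] ord \<eta> by (auto simp: T1_def T2_def)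
  have a1I: "a1 \<in> ?I" and b1I: "b1 \<in> ?I" using ord by auto
  have iF: "set_integrable lebesgue ?I (\<lambda>x. F x * Wt a1 b1 \<epsilon> x)"
    using iY by (subst set_integrable_cong[where f'=Y]) (auto simp: F_def Y_def W_def mult_ac)
  have LY: "(LINT x:?I|lebesgue. Y x) = (LINT x:?I|lebesgue. F x * Wt a1 b1 \<epsilon> x)"
    by (rule set_lebesgue_integral_cong) (auto simp: F_def Y_def W_def mult_ac)
  have C1: "sqrt NN * (sqrt Np * sqrt K + \<bar>\<psi> a1\<bar>) \<ge> 0" "sqrt NN * (sqrt Np * sqrt K + \<bar>\<psi> b1\<bar>) \<ge> 0"
  proof -
    have K0: "K > 0" unfolding K_def using ord by (intro Kc_pos) simp
    show "sqrt NN * (sqrt Np * sqrt K + \<bar>\<psi> a1\<bar>) \<ge> 0" "sqrt NN * (sqrt Np * sqrt K + \<bar>\<psi> b1\<bar>) \<ge> 0"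
      using NN0 Np0 K0 by (auto intro!: mult_nonneg_nonneg add_nonneg_nonneg)
  qed
  have Bd: "\<bar>(LINT x:?I|lebesgue. F x * Wt a1 b1 \<epsilon> x) - F a1 - F b1\<bar>
      \<le> (sqrt NN * (sqrt Np * sqrt K + \<bar>\<psi> a1\<bar>)) * T1 + \<bar>F a1\<bar> * Er1
       + ((sqrt NN * (sqrt Np * sqrt K + \<bar>\<psi> b1\<bar>)) * T2 + \<bar>F b1\<bar> * Er2)"
    unfolding T1_def T2_def Er1_def Er2_def
  proof (rule boundary_est[OF ord \<epsilon> \<eta> c1 c2 iF _ C1(1) _ C1(2)])
    fix x assume x: "x \<in> ?I"
    show "\<bar>F x - F a1\<bar> \<le> sqrt NN * (sqrt Np * sqrt K + \<bar>\<psi> a1\<bar>) * sqrt \<bar>x - a1\<bar>"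
      using prod_bound[OF \<psi>H wH x a1I] by (simp add: F_def NN_def Np_def K_def)
    show "\<bar>F x - F b1\<bar> \<le> sqrt NN * (sqrt Np * sqrt K + \<bar>\<psi> b1\<bar>) * sqrt \<bar>x - b1\<bar>"
      using prod_bound[OF \<psi>H wH x b1I] by (simp add: F_def NN_def Np_def K_def)
  qed
  have Fa: "\<bar>F c\<bar> \<le> \<bar>\<psi> c\<bar> * (sqrt K * sqrt NN)" if "c \<in> ?I" for c
    using w_bound[OF wH that] unfolding F_def abs_mult K_def NN_def by (intro mult_left_mono) auto
  have "(sqrt NN * (sqrt Np * sqrt K + \<bar>\<psi> a1\<bar>)) * T1 + \<bar>F a1\<bar> * Er1
       + ((sqrt NN * (sqrt Np * sqrt K + \<bar>\<psi> b1\<bar>)) * T2 + \<bar>F b1\<bar> * Er2)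
      \<le> (sqrt NN * (sqrt Np * sqrt K + \<bar>\<psi> a1\<bar>)) * T1 + (\<bar>\<psi> a1\<bar> * (sqrt K * sqrt NN)) * Er1
       + ((sqrt NN * (sqrt Np * sqrt K + \<bar>\<psi> b1\<bar>)) * T2 + (\<bar>\<psi> b1\<bar> * (sqrt K * sqrt NN)) * Er2)"
    using Fa[OF a1I] Fa[OF b1I] by (intro add_mono mult_right_mono order_refl) (auto simp: Er1_def Er2_def)
  also have "\<dots> = sqrt NN * Af" by (simp add: Af_def algebra_simps)
  finally have Bd2: "\<bar>(LINT x:?I|lebesgue. Y x) - F a1 - F b1\<bar> \<le> sqrt NN * Af" using Bd LY by simp
  have am: "Af * sqrt NN \<le> Af^2 / mm + mm * (sqrt NN)^2 / 4" by (rule amgm[OF mm])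
  have sq: "(sqrt NN)^2 = NN" using NN0 by simp
  have Nd0: "0 \<le> (LINT x:?I|lebesgue. (dw x)^2)" using wL(2) by (rule L2_int_nonneg)
  have NNe: "NN = (LINT x:?I|lebesgue. (w x)^2) + (LINT x:?I|lebesgue. (dw x)^2)" by (simp add: NN_def NH_def)
  have "\<psi> a1 * w a1 + \<psi> b1 * w b1 - (LINT x:?I|lebesgue. Y x) \<le> sqrt NN * Af"
    using Bd2 by (simp add: F_def)
  then have fin: "mm / 4 * NN \<le> (LINT x:?I|lebesgue. E1f x) + Af^2 / mm"
  proof -
    let ?Nw = "LINT x:?I|lebesgue. (w x)^2" and ?Nd = "LINT x:?I|lebesgue. (dw x)^2"
    have m1: "mm * ?Nd \<ge> 0" using mm Nd0 by simp
    have m2: "mm * NN = mm * ?Nw + mm * ?Nd" using NNe by (simp add: algebra_simps)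
    have m3: "Af * sqrt NN \<le> Af^2 / mm + mm * NN / 4" using am sq by simp
    have m4: "sqrt NN * Af = Af * sqrt NN" by simp
    from low \<open>\<psi> a1 * w a1 + \<psi> b1 * w b1 - (LINT x:?I|lebesgue. Y x) \<le> sqrt NN * Af\<close> m3 m4
    have "mm / 2 * ?Nw + 3 * mm / 4 * ?Nd - (LINT x:?I|lebesgue. E1f x) \<le> Af^2 / mm + mm * NN / 4" by linarith
    moreover have "mm / 2 * ?Nw = (mm * ?Nw) / 2" "3 * mm / 4 * ?Nd = 3 * (mm * ?Nd) / 4" "mm / 4 * NN = (mm * NN) / 4"
      by simp_all
    ultimately show ?thesis using m1 m2 by linarith
  qed
  show ?thesis
    using fin unfolding E1val NN_def w_def dw_def Af_def T1_def T2_def Er1_def Er2_def Np_def K_def .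
qed

lemma Af_lim:
  fixes a b a1 b1 c1 c2 c3 c4 :: real
  assumes ord: "a < a1" "a1 < b1" "b1 < b"
  shows "((\<lambda>\<epsilon>. c1 * (sqrt (sqrt \<epsilon>) + sqrt ((a1+b1)/2 - a) * (1 - tanh (sqrt \<epsilon> / \<epsilon>)))
         + c2 * \<bar>Phi \<epsilon> a1 ((a1+b1)/2) - Phi \<epsilon> a1 a - 1\<bar>
         + c3 * (sqrt (sqrt \<epsilon>) + sqrt (b - (a1+b1)/2) * (1 - tanh (sqrt \<epsilon> / \<epsilon>)))
         + c4 * \<bar>Phi \<epsilon> b1 b - Phi \<epsilon> b1 ((a1+b1)/2) - 1\<bar>) \<longlongrightarrow> 0) (at_right 0)"
proof -
  have s: "((\<lambda>\<epsilon>::real. sqrt (sqrt \<epsilon>)) \<longlongrightarrow> 0) (at_right 0)" by real_asymp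
  have t: "((\<lambda>\<epsilon>::real. tanh (sqrt \<epsilon> / \<epsilon>)) \<longlongrightarrow> 1) (at_right 0)"
  proof -
    have "filterlim (\<lambda>\<epsilon>::real. sqrt \<epsilon> / \<epsilon>) at_top (at_right 0)" by real_asymp
    then show ?thesis by (rule filterlim_compose[OF tanh_real_at_top])
  qed
  have P1: "((\<lambda>\<epsilon>. Phi \<epsilon> c x) \<longlongrightarrow> 1) (at_right 0)" if "x > c" for c x
  proof -
    have "((\<lambda>\<epsilon>. (1 + tanh ((x - c) / \<epsilon>)) / 2) \<longlongrightarrow> (1 + 1) / 2) (at_right 0)"
      using that by (intro tendsto_intros lim_pos) auto
    then show ?thesis by (simp add: Phi_def)
  qed
  have P0: "((\<lambda>\<epsilon>. Phi \<epsilon> c x) \<longlongrightarrow> 0) (at_right 0)" if "x < c" for c x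
  proof -
    have "((\<lambda>\<epsilon>. (1 + tanh ((x - c) / \<epsilon>)) / 2) \<longlongrightarrow> (1 + -1) / 2) (at_right 0)"
      using that by (intro tendsto_intros lim_neg) auto
    then show ?thesis by (simp add: Phi_def)
  qed
  have "((\<lambda>\<epsilon>. c1 * (sqrt (sqrt \<epsilon>) + sqrt ((a1+b1)/2 - a) * (1 - tanh (sqrt \<epsilon> / \<epsilon>)))
         + c2 * \<bar>Phi \<epsilon> a1 ((a1+b1)/2) - Phi \<epsilon> a1 a - 1\<bar>
         + c3 * (sqrt (sqrt \<epsilon>) + sqrt (b - (a1+b1)/2) * (1 - tanh (sqrt \<epsilon> / \<epsilon>)))
         + c4 * \<bar>Phi \<epsilon> b1 b - Phi \<epsilon> b1 ((a1+b1)/2) - 1\<bar>) \<longlongrightarrow>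
       c1 * (0 + sqrt ((a1+b1)/2 - a) * (1 - 1)) + c2 * \<bar>1 - 0 - 1\<bar> + c3 * (0 + sqrt (b - (a1+b1)/2) * (1 - 1)) + c4 * \<bar>1 - 0 - 1\<bar>) (at_right 0)"
    using ord by (intro tendsto_intros s t P1 P0) auto
  then show ?thesis by simp
qed

theorem mainTheorem7:
  fixes a b a1 b1 \<alpha> \<beta> \<gamma> \<kappa> :: real
    and h q g u0 du0 :: "real \<Rightarrow> real"
    and u du :: "real \<Rightarrow> real \<Rightarrow> real"
  assumes ord: "a < a1" "a1 < b1" "b1 < b"
    and pos: "\<alpha> > 0" "\<beta> > 0" "\<gamma> > 0" "\<kappa> \<ge> 0"
    and hL2: "L2 a b h" and qL2: "L2 a b q"
    and gH1: "\<exists>dg. H1 a b g dg"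
    and u0H1: "H1 a b u0 du0"
    and u0min: "\<And>v dv. H1 a b v dv \<Longrightarrow>
        E0 a b a1 b1 \<alpha> \<beta> \<gamma> \<kappa> h q g u0 du0 \<le> E0 a b a1 b1 \<alpha> \<beta> \<gamma> \<kappa> h q g v dv"
    and uH1: "\<And>\<epsilon>. \<epsilon> \<in> {0<..<1} \<Longrightarrow> H1 a b (u \<epsilon>) (du \<epsilon>)"
    and uweak: "\<And>\<epsilon> v dv. \<epsilon> \<in> {0<..<1} \<Longrightarrow> H1 a b v dv \<Longrightarrow>
        (LINT x:{a<..<b}|lebesgue.
            (\<alpha> + (1 - \<alpha>) * phi_eps a1 b1 \<epsilon> x) * du \<epsilon> x * dv x
          + (\<beta> + (\<gamma> - \<beta>) * phi_eps a1 b1 \<epsilon> x) * u \<epsilon> x * v x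
          + (\<kappa> * u \<epsilon> x + g x) * \<bar>deriv (phi_eps a1 b1 \<epsilon>) x\<bar> * v x)
        = (LINT x:{a<..<b}|lebesgue. (h x + (q x - h x) * phi_eps a1 b1 \<epsilon> x) * v x)"
  shows "\<forall>e :: nat \<Rightarrow> real. (\<forall>k. e k \<in> {0<..<1}) \<and> decseq e \<and> e \<longlonglongrightarrow> 0 \<longrightarrow>
     (\<exists>r. strict_mono r \<and>
        (\<lambda>j. (LINT x:{a<..<b}|lebesgue. (u (e (r j)) x - u0 x)^2)
            + (LINT x:{a<..<b}|lebesgue. (du (e (r j)) x - du0 x)^2)) \<longlonglongrightarrow> 0)"
proof (intro allI impI)
  fix e :: "nat \<Rightarrow> real"
  assume E: "(\<forall>k. e k \<in> {0<..<1}) \<and> decseq e \<and> e \<longlonglongrightarrow> 0"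
  then have epos: "\<And>k. e k > 0" and e1: "\<And>k. e k < 1" and e0: "e \<longlonglongrightarrow> 0" by auto
  obtain dg where gH: "H1 a b g dg" using gH1 by blast
  define mm where "mm = min (min \<alpha> 1) (min \<beta> \<gamma>)"
  have mm: "mm > 0" using pos by (simp add: mm_def)
  define \<psi> where "\<psi> = (\<lambda>x. g x + \<kappa> * u0 x)"
  define d\<psi> where "d\<psi> = (\<lambda>x. dg x + \<kappa> * du0 x)"
  define Np where "Np = (LINT t:{a<..<b}|lebesgue. (d\<psi> t)^2)"
  define K where "K = Kc a b"
  define Rf where "Rf = (\<lambda>\<epsilon> H. LINT x:{a<..<b}|lebesgue. (phi_eps a1 b1 \<epsilon> x - indicator {a1<..<b1} x)^2 * (H x)^2)"
  define Af where "Af = (\<lambda>\<epsilon>. (sqrt Np * sqrt K + \<bar>\<psi> a1\<bar>) * (sqrt (sqrt \<epsilon>) + sqrt ((a1+b1)/2 - a) * (1 - tanh (sqrt \<epsilon> / \<epsilon>)))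
         + \<bar>\<psi> a1\<bar> * sqrt K * \<bar>Phi \<epsilon> a1 ((a1+b1)/2) - Phi \<epsilon> a1 a - 1\<bar>
         + (sqrt Np * sqrt K + \<bar>\<psi> b1\<bar>) * (sqrt (sqrt \<epsilon>) + sqrt (b - (a1+b1)/2) * (1 - tanh (sqrt \<epsilon> / \<epsilon>)))
         + \<bar>\<psi> b1\<bar> * sqrt K * \<bar>Phi \<epsilon> b1 b - Phi \<epsilon> b1 ((a1+b1)/2) - 1\<bar>)"
  define Z where "Z = (\<lambda>\<epsilon>. (1 / mm) * (Rf \<epsilon> (\<lambda>x. q x - h x) + (1 - \<alpha>)^2 * Rf \<epsilon> du0 + (\<gamma> - \<beta>)^2 * Rf \<epsilon> u0) + (Af \<epsilon>)^2 / mm)"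
  define NN where "NN = (\<lambda>j. (LINT x:{a<..<b}|lebesgue. (u (e j) x - u0 x)^2) + (LINT x:{a<..<b}|lebesgue. (du (e j) x - du0 x)^2))"
  have fe: "filterlim e (at_right 0) sequentially"
    using e0 epos by (intro tendsto_imp_filterlim_at_right) auto
  define \<delta> where "\<delta> = min (min (a1 - a) ((a1+b1)/2 - a1)) (min (b1 - (a1+b1)/2) (b - b1))"
  have \<delta>: "\<delta> > 0" using ord by (simp add: \<delta>_def)
  have se: "(\<lambda>k. sqrt (e k)) \<longlonglongrightarrow> 0" using tendsto_real_sqrt[OF e0] by simp
  have ev: "\<forall>\<^sub>F k in sequentially. sqrt (e k) < \<delta>" using se \<delta> by (rule order_tendstoD)
  have bound: "\<forall>\<^sub>F k in sequentially. NN k \<le> (4 / mm) * Z (e k)"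
    using ev
  proof (rule eventually_mono)
    fix k assume sk: "sqrt (e k) < \<delta>"
    have ek: "e k \<in> {0<..<1}" using epos e1 by auto
    have "mm / 4 * NH a b (\<lambda>x. u (e k) x - u0 x) (\<lambda>x. du (e k) x - du0 x) \<le> Z (e k)"
    proof -
      have key: "mm / 4 * NH a b (\<lambda>x. u (e k) x - u0 x) (\<lambda>x. du (e k) x - du0 x)
        \<le> (1 / mm) * ((LINT x:{a<..<b}|lebesgue. (phi_eps a1 b1 (e k) x - indicator {a1<..<b1} x)^2 * (q x - h x)^2)
         + (1 - \<alpha>)^2 * (LINT x:{a<..<b}|lebesgue. (phi_eps a1 b1 (e k) x - indicator {a1<..<b1} x)^2 * (du0 x)^2)
         + (\<gamma> - \<beta>)^2 * (LINT x:{a<..<b}|lebesgue. (phi_eps a1 b1 (e k) x - indicator {a1<..<b1} x)^2 * (u0 x)^2))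
        + ((sqrt (LINT t:{a<..<b}|lebesgue. (d\<psi> t)^2) * sqrt (Kc a b) + \<bar>\<psi> a1\<bar>) * (sqrt (sqrt (e k)) + sqrt ((a1+b1)/2 - a) * (1 - tanh (sqrt (e k) / e k)))
         + \<bar>\<psi> a1\<bar> * sqrt (Kc a b) * \<bar>Phi (e k) a1 ((a1+b1)/2) - Phi (e k) a1 a - 1\<bar>
         + (sqrt (LINT t:{a<..<b}|lebesgue. (d\<psi> t)^2) * sqrt (Kc a b) + \<bar>\<psi> b1\<bar>) * (sqrt (sqrt (e k)) + sqrt (b - (a1+b1)/2) * (1 - tanh (sqrt (e k) / e k)))
         + \<bar>\<psi> b1\<bar> * sqrt (Kc a b) * \<bar>Phi (e k) b1 b - Phi (e k) b1 ((a1+b1)/2) - 1\<bar>)^2 / mm"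
        unfolding mm_def \<psi>_def d\<psi>_def
        by (rule key_ineq[OF ord pos hL2 qL2 gH u0H1 u0min uH1[OF ek] uweak[OF ek] epos]) (use sk \<delta>_def epos[of k] in auto)
      then show ?thesis by (simp add: Z_def Rf_def Af_def Np_def K_def)
    qed
    then show "NN k \<le> (4 / mm) * Z (e k)"
      using mm by (simp add: NN_def NH_def field_simps)
  qed
  have NN0: "0 \<le> NN k" for k
    unfolding NN_def set_lebesgue_integral_def
    by (intro add_nonneg_nonneg integral_nonneg_AE) (auto simp: indicator_def)
  have Rlim: "(\<lambda>k. Rf (e k) H) \<longlonglongrightarrow> 0" if "L2 a b H" for H
    unfolding Rf_def by (rule rho_DCT[OF ord(2) that epos e0])
  have u0L: "L2 a b u0" "L2 a b du0" using u0H1 by (auto simp: H1_def)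
  have Alim: "(\<lambda>k. Af (e k)) \<longlonglongrightarrow> 0"
    unfolding Af_def by (rule filterlim_compose[OF Af_lim[OF ord] fe])
  have Zlim: "(\<lambda>k. Z (e k)) \<longlonglongrightarrow> 0"
  proof -
    have "(\<lambda>k. (1 / mm) * (Rf (e k) (\<lambda>x. q x - h x) + (1 - \<alpha>)^2 * Rf (e k) du0 + (\<gamma> - \<beta>)^2 * Rf (e k) u0) + (Af (e k))^2 / mm)
        \<longlonglongrightarrow> (1 / mm) * (0 + (1 - \<alpha>)^2 * 0 + (\<gamma> - \<beta>)^2 * 0) + 0^2 / mm"
      using mm by (intro tendsto_intros Rlim L2_diff qL2 hL2 u0L Alim) auto
    then show ?thesis by (simp add: Z_def)
  qed
  have "NN \<longlonglongrightarrow> 0"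
  proof (rule tendsto_sandwich[where f="\<lambda>k. 0" and h="\<lambda>k. (4 / mm) * Z (e k)"])
    show "\<forall>\<^sub>F k in sequentially. 0 \<le> NN k" using NN0 by simp
    show "\<forall>\<^sub>F k in sequentially. NN k \<le> (4 / mm) * Z (e k)" by (rule bound)
    show "((\<lambda>k. (4 / mm) * Z (e k)) \<longlongrightarrow> 0) sequentially"
      using tendsto_mult[OF tendsto_const Zlim, of "4 / mm"] by simp
  qed simp
  then show "\<exists>r. strict_mono r \<and>
        (\<lambda>j. (LINT x:{a<..<b}|lebesgue. (u (e (r j)) x - u0 x)^2)
            + (LINT x:{a<..<b}|lebesgue. (du (e (r j)) x - du0 x)^2)) \<longlonglongrightarrow> 0"
    by (intro exI[of _ id]) (simp add: strict_mono_def NN_def)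
qed

end
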